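(* Let $f:\mathbb{R}^n\to(-\infty,+\infty]$ be a closed function that is subdifferentially continuous, let $S=\arg\min f$ be nonempty, and let $\bar x\in S$. Suppose that a set $\mathcal{M}\subset\mathbb{R}^n$ containing $\bar x$ is an identifiable manifold at $\bar x$ for $0\in\hat\partial f(\bar x)$. Then the following are equivalent: (i) (local EB on $(\mathbb{R}^n,d)$) there exist $\epsilon>0,\mu>0$ such that $\mu\,\operatorname{dist}(x,S)\le|\nabla f|(x)$ for all $x\in B_\epsilon(\bar x)$; (ii) (local EB on $(\mathcal{M},d)$) there exist $\epsilon>0,\mu>0$ such that $\mu\,\operatorname{dist}(x,S\cap\mathcal{M})\le|\nabla(f|_{\mathcal{M}})|(x)$ for all $x\in B_\epsilon(\bar x)\cap\mathcal{M}$.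
   Context: $d$ is the Euclidean distance and $B_\epsilon(\bar x)$ the open Euclidean ball. $\hat\partial f$ denotes the Fréchet (regular) subdifferential and $\partial f$ the limiting subdifferential. $x\to_f\bar x$ means $x\to\bar x$ and $f(x)\to f(\bar x)$. $f$ is subdifferentially continuous at $\bar x$ for $\bar v\in\partial f(\bar x)$ if for all sequences $x_k\to\bar x$, $v_k\to\bar v$ with $v_k\in\partial f(x_k)$ one has $f(x_k)\to f(\bar x)$; subdifferentially continuous at $\bar x$ means this holds for every $\bar v\in\partial f(\bar x)$, and "subdifferentially continuous" means at every point. Slope: for $x\in\operatorname{dom}f$, $|\nabla f|(x)=0$ if $x$ is a local minimizer of $f$, and otherwise $|\nabla f|(x)=\limsup_{x'\to x,\,x'\neq x}\frac{f(x)-f(x')}{d(x,x')}$. For $x\in\mathcal{M}$, $|\nabla(f|_{\mathcal{M}})|(x)$ is the same quantity for the restriction $f|_{\mathcal{M}}$, i.e. with $x'$ ranging over $\mathcal{M}$ (and $0$ if $x$ is a local minimizer of $f|_{\mathcal M}$). Identifiable manifold: for a closed $f$, $\bar x\in\operatorname{dom}f$ with $0\in\hat\partial f(\bar x)$, a set $\mathcal{M}\ni\bar x$ is an identifiable manifold at $\bar x$ for $0\in\hat\partial f(\bar x)$ if (Sharpness) $\liminf_{x\to_f\bar x,\;x\notin\mathcal{M},\;y\in\partial f(x)}\|y\|>0$, and (Smoothness) $\mathcal{M}$ is a $C^2$-smooth embedded submanifold of $\mathbb{R}^n$ around $\bar x$ and $f|_{\mathcal{M}}$ is $C^2$-smooth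 around $\bar x$ (i.e. locally agrees on $\mathcal M$ with a $C^2$ function on an open set of $\mathbb{R}^n$). *)

theory Defs
  imports "HOL-Analysis.Analysis"
begin

definition closed_fun :: "('a::euclidean_space \<Rightarrow> ereal) \<Rightarrow> bool" where
  "closed_fun f \<longleftrightarrow> closed {(x, t::real). f x \<le> ereal t}"

definition argmin_set :: "('a \<Rightarrow> ereal) \<Rightarrow> 'a set" where
  "argmin_set f = {x. \<forall>y. f x \<le> f y}"

definition frechet_subdiff :: "('a::euclidean_space \<Rightarrow> ereal) \<Rightarrow> 'a \<Rightarrow> 'a set" where
  "frechet_subdiff f x = {v. f x \<noteq> \<infinity> \<and> f x \<noteq> -\<infinity> \<and>
     Liminf (at x) (\<lambda>y. (f y - f x - ereal (v \<bullet> (y - x))) / ereal (norm (y - x))) \<ge> 0}"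

definition limiting_subdiff :: "('a::euclidean_space \<Rightarrow> ereal) \<Rightarrow> 'a \<Rightarrow> 'a set" where
  "limiting_subdiff f x = {v. f x \<noteq> \<infinity> \<and> f x \<noteq> -\<infinity> \<and>
     (\<exists>xs vs. xs \<longlonglongrightarrow> x \<and> (\<lambda>k. f (xs k)) \<longlonglongrightarrow> f x \<and>
        (\<forall>k. vs k \<in> frechet_subdiff f (xs k)) \<and> vs \<longlonglongrightarrow> v)}"

definition subdiff_continuous_at :: "('a::euclidean_space \<Rightarrow> ereal) \<Rightarrow> 'a \<Rightarrow> bool" where
  "subdiff_continuous_at f x \<longleftrightarrow> (\<forall>v \<in> limiting_subdiff f x. \<forall>xs vs.
     xs \<longlonglongrightarrow> x \<and> vs \<longlonglongrightarrow> v \<and> (\<forall>k. vs k \<in> limiting_subdiff f (xs k))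
       \<longrightarrow> (\<lambda>k. f (xs k)) \<longlonglongrightarrow> f x)"

definition subdiff_continuous :: "('a::euclidean_space \<Rightarrow> ereal) \<Rightarrow> bool" where
  "subdiff_continuous f \<longleftrightarrow> (\<forall>x. subdiff_continuous_at f x)"

definition local_min_on :: "('a::metric_space \<Rightarrow> ereal) \<Rightarrow> 'a set \<Rightarrow> 'a \<Rightarrow> bool" where
  "local_min_on f M x \<longleftrightarrow> (\<exists>\<delta>>0. \<forall>y\<in>M. dist y x < \<delta> \<longrightarrow> f x \<le> f y)"

definition slope_on :: "('a::metric_space \<Rightarrow> ereal) \<Rightarrow> 'a set \<Rightarrow> 'a \<Rightarrow> ereal" where
  "slope_on f M x =
     (if f x = \<infinity> then \<infinity>
      else if local_min_on f M x then 0
      else Limsup (at x within M) (\<lambda>y. (f x - f y) / ereal (dist x y)))"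

abbreviation slope :: "('a::metric_space \<Rightarrow> ereal) \<Rightarrow> 'a \<Rightarrow> ereal" where
  "slope f \<equiv> slope_on f UNIV"

definition C2_on :: "'a::euclidean_space set \<Rightarrow> ('a \<Rightarrow> 'b::euclidean_space) \<Rightarrow> bool" where
  "C2_on U g \<longleftrightarrow> open U \<and> (\<exists>g' g''.
     (\<forall>x\<in>U. (g has_derivative blinfun_apply (g' x)) (at x)) \<and>
     (\<forall>x\<in>U. (g' has_derivative blinfun_apply (g'' x)) (at x)) \<and>
     continuous_on U g'')"

definition C2_submanifold_around :: "'a::euclidean_space set \<Rightarrow> 'a \<Rightarrow> bool" where
  "C2_submanifold_around M xb \<longleftrightarrow> (\<exists>U V \<phi> \<psi> L.
     open U \<and> xb \<in> U \<and> open V \<and> subspace L \<and> C2_on U (\<phi> :: 'a \<Rightarrow> 'a) \<and> C2_on V \<psi> \<and>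
     (\<forall>x\<in>U. \<phi> x \<in> V \<and> \<psi> (\<phi> x) = x) \<and> (\<forall>y\<in>V. \<psi> y \<in> U \<and> \<phi> (\<psi> y) = y) \<and>
     \<phi> ` (M \<inter> U) = V \<inter> L)"

definition C2_restriction_around ::
    "('a::euclidean_space \<Rightarrow> ereal) \<Rightarrow> 'a set \<Rightarrow> 'a \<Rightarrow> bool" where
  "C2_restriction_around f M xb \<longleftrightarrow> (\<exists>U g.
     open U \<and> xb \<in> U \<and> C2_on U (g :: 'a \<Rightarrow> real) \<and> (\<forall>x\<in>M \<inter> U. f x = ereal (g x)))"

text \<open>The sharpness
  liminf condition is written out: liminf > 0 iff the norms are bounded below by some
  eta > 0 near xb (with f-attentive convergence).\<close>
definition identifiable_manifold ::
    "('a::euclidean_space \<Rightarrow> ereal) \<Rightarrow> 'a set \<Rightarrow> 'a \<Rightarrow> bool" where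
  "identifiable_manifold f M xb \<longleftrightarrow>
     f xb \<noteq> \<infinity> \<and> 0 \<in> frechet_subdiff f xb \<and> xb \<in> M \<and>
     (\<exists>\<eta>>0. \<exists>\<delta>>0. \<forall>x y. dist x xb < \<delta> \<and> \<bar>f x - f xb\<bar> < ereal \<delta> \<and> x \<notin> M \<and>
         y \<in> limiting_subdiff f x \<longrightarrow> norm y \<ge> \<eta>) \<and>
     C2_submanifold_around M xb \<and> C2_restriction_around f M xb"

end

theory Submission
  imports Defs
begin

lemma ereal_add_le_iff: "(x::ereal) + ereal a \<le> ereal t \<longleftrightarrow> x \<le> ereal (t - a)"
  by (cases x) auto

lemma closed_fun_sublevel:
  assumes "closed_fun f" shows "closed {x. f x \<le> ereal t}"
proof -
  have "{x. f x \<le> ereal t} = (\<lambda>x. (x, t)) -` {(x, t::real). f x \<le> ereal t}" by auto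
  moreover have "closed ((\<lambda>x. (x, t)) -` {(x, t::real). f x \<le> ereal t})"
    by (rule continuous_closed_vimage) (use assms[unfolded closed_fun_def] in \<open>auto intro!: continuous_intros\<close>)
  ultimately show ?thesis by simp
qed

lemma lsc_min:
  fixes f :: "'a::euclidean_space \<Rightarrow> ereal"
  assumes cf: "closed_fun f" and K: "compact K" "K \<noteq> {}" and q: "continuous_on K q"
  shows "\<exists>z\<in>K. \<forall>y\<in>K. f z + ereal (q z) \<le> f y + ereal (q y)"
proof -
  define m where "m = (INF y\<in>K. f y + ereal (q y))"
  define C where "C t = {y\<in>K. f y + ereal (q y) \<le> ereal t}" for t
  have clC: "closed (C t)" for t
  proof -
    have "C t = K \<inter> (\<lambda>y. (y, t - q y)) -` {(x, t::real). f x \<le> ereal t}"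
      by (auto simp: C_def ereal_add_le_iff)
    moreover have "closed (K \<inter> (\<lambda>y. (y, t - q y)) -` {(x, t::real). f x \<le> ereal t})"
      by (rule continuous_closed_preimage)
        (use q K cf[unfolded closed_fun_def] compact_imp_closed in \<open>auto intro!: continuous_intros\<close>)
    ultimately show ?thesis by simp
  qed
  have "K \<inter> \<Inter>(C ` {t. m < ereal t}) \<noteq> {}"
  proof (rule compact_imp_fip[OF K(1)])
    fix T assume "T \<in> C ` {t. m < ereal t}" thus "closed T" using clC by auto
  next
    fix F' assume F': "finite F'" "F' \<subseteq> C ` {t. m < ereal t}"
    then obtain T' where T': "T' \<subseteq> {t. m < ereal t}" "finite T'" "F' = C ` T'"
      by (meson finite_subset_image)
    show "K \<inter> \<Inter>F' \<noteq> {}"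
    proof (cases "T' = {}")
      case True thus ?thesis using T' K by auto
    next
      case False
      define t0 where "t0 = Min T'"
      have "t0 \<in> T'" using False T' by (simp add: t0_def)
      hence "m < ereal t0" using T' by auto
      then obtain y where y: "y \<in> K" "f y + ereal (q y) < ereal t0"
        unfolding m_def by (meson INF_less_iff)
      have "y \<in> C t" if "t \<in> T'" for t
      proof -
        have "t0 \<le> t" using that T' by (simp add: t0_def)
        hence "ereal t0 \<le> ereal t" by simp
        thus ?thesis using y by (auto simp: C_def intro: order_trans[OF less_imp_le])
      qed
      thus ?thesis using y T' by auto
    qed
  qed
  then obtain z where z: "z \<in> K" "\<And>t. m < ereal t \<Longrightarrow> z \<in> C t" by auto
  have "f z + ereal (q z) \<le> m"
  proof (rule ccontr)
    assume "\<not> ?thesis"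
    hence "m < f z + ereal (q z)" by simp
    then obtain t where "m < ereal t" "ereal t < f z + ereal (q z)"
      by (meson ereal_dense2 less_trans)
    thus False using z(2)[of t] by (auto simp: C_def)
  qed
  moreover have "m \<le> f y + ereal (q y)" if "y \<in> K" for y
    unfolding m_def using that by (rule INF_lower)
  ultimately show ?thesis using z(1) by (meson order_trans)
qed

lemma slope_le:
  assumes fin: "f x \<noteq> \<infinity>" "\<forall>y. f y \<noteq> -\<infinity>" and t: "0 \<le> t" and r: "r > 0"
    and H: "\<forall>y\<in>M. dist y x < r \<longrightarrow> f x - ereal (t * dist y x) \<le> f y"
  shows "slope_on f M x \<le> ereal t"
proof (cases "local_min_on f M x")
  case True thus ?thesis using fin t by (simp add: slope_on_def)
next
  case False
  obtain a where a: "f x = ereal a" using fin by (cases "f x") auto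
  have "eventually (\<lambda>y. (f x - f y) / ereal (dist x y) \<le> ereal t) (at x within M)"
    unfolding eventually_at
  proof (intro exI[of _ r] conjI allI impI ballI)
    fix y assume y: "y \<in> M" "y \<noteq> x \<and> dist y x < r"
    hence d: "dist x y > 0" by auto
    have le: "f x - ereal (t * dist y x) \<le> f y" using H y by auto
    show "(f x - f y) / ereal (dist x y) \<le> ereal t"
    proof (cases "f y")
      case (real b)
      hence "a - t * dist x y \<le> b" using le a by (simp add: dist_commute)
      hence "(a - b) / dist x y \<le> t" using d by (simp add: divide_le_eq)
      thus ?thesis using real a d by simp
    next
      case PInf thus ?thesis using a d by simp
    next
      case MInf thus ?thesis using fin by simp
    qed
  qed (use r in auto)
  hence "Limsup (at x within M) (\<lambda>y. (f x - f y) / ereal (dist x y)) \<le> ereal t"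
    by (rule Limsup_bounded)
  thus ?thesis using False fin by (simp add: slope_on_def)
qed

lemma slope_ge_aux:
  assumes fin: "f x \<noteq> \<infinity>" and nm: "\<not> local_min_on f M x"
    and H: "\<forall>\<delta>>0. \<exists>y\<in>M. y \<noteq> x \<and> dist y x < \<delta> \<and> ereal a \<le> (f x - f y) / ereal (dist x y)"
  shows "ereal a \<le> slope_on f M x"
proof -
  have "ereal a \<le> Limsup (at x within M) (\<lambda>y. (f x - f y) / ereal (dist x y))"
    unfolding Limsup_def
  proof (rule INF_greatest)
    fix P assume "P \<in> {P. eventually P (at x within M)}"
    then obtain d where d: "d > 0" "\<forall>y\<in>M. y \<noteq> x \<and> dist y x < d \<longrightarrow> P y"
      unfolding eventually_at by auto
    obtain y where y: "y \<in> M" "y \<noteq> x" "dist y x < d" "ereal a \<le> (f x - f y) / ereal (dist x y)"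
      using H d by blast
    show "ereal a \<le> (SUP y\<in>Collect P. (f x - f y) / ereal (dist x y))"
      using y d by (auto intro: SUP_upper2)
  qed
  thus ?thesis using fin nm by (simp add: slope_on_def)
qed

lemma slope_nonneg:
  assumes fin: "\<forall>y. f y \<noteq> -\<infinity>"
  shows "0 \<le> slope_on f M x"
proof (cases "f x = \<infinity>")
  case True thus ?thesis by (simp add: slope_on_def)
next
  case fx: False
  show ?thesis
  proof (cases "local_min_on f M x")
    case True thus ?thesis using fx by (simp add: slope_on_def)
  next
    case nm: False
    have "ereal 0 \<le> slope_on f M x"
    proof (rule slope_ge_aux[OF fx nm], intro allI impI)
      fix \<delta> :: real assume "\<delta> > 0"
      then obtain y where y: "y \<in> M" "dist y x < \<delta>" "\<not> f x \<le> f y"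
        using nm unfolding local_min_on_def by auto
      have "y \<noteq> x" using y by auto
      moreover have "ereal 0 \<le> (f x - f y) / ereal (dist x y)"
      proof -
        obtain a where a: "f x = ereal a" using fx fin by (cases "f x") auto
        obtain b where b: "f y = ereal b" using y(3) a fin by (cases "f y") auto
        have "0 < dist x y" using \<open>y \<noteq> x\<close> by simp
        thus ?thesis using a b y(3) by simp
      qed
      ultimately show "\<exists>y\<in>M. y \<noteq> x \<and> dist y x < \<delta> \<and> ereal 0 \<le> (f x - f y) / ereal (dist x y)"
        using y by blast
    qed
    thus ?thesis by (simp add: zero_ereal_def)
  qed
qed

lemma slope_ge:
  assumes fin: "f x \<noteq> \<infinity>" "\<forall>y. f y \<noteq> -\<infinity>" and a: "a > 0"
    and H: "\<forall>\<delta>>0. \<exists>y\<in>M. y \<noteq> x \<and> dist y x < \<delta> \<and> f y \<le> f x - ereal (a * dist y x)"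
  shows "ereal a \<le> slope_on f M x"
proof -
  obtain c where c: "f x = ereal c" using fin by (cases "f x") auto
  have key: "y \<noteq> x \<Longrightarrow> f y \<le> f x - ereal (a * dist y x) \<Longrightarrow>
      f y < f x \<and> ereal a \<le> (f x - f y) / ereal (dist x y)" for y
  proof -
    assume y: "y \<noteq> x" "f y \<le> f x - ereal (a * dist y x)"
    have d: "0 < dist x y" using y by simp
    obtain b where b: "f y = ereal b" using y fin c by (cases "f y") auto
    have "b \<le> c - a * dist x y" using y b c by (simp add: dist_commute)
    moreover have "0 < a * dist x y" using a d by simp
    ultimately show ?thesis using b c d by (simp add: le_divide_eq)
  qed
  have nm: "\<not> local_min_on f M x"
    unfolding local_min_on_def
  proof
    assume "\<exists>\<delta>>0. \<forall>y\<in>M. dist y x < \<delta> \<longrightarrow> f x \<le> f y"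
    then obtain \<delta> where "\<delta> > 0" "\<forall>y\<in>M. dist y x < \<delta> \<longrightarrow> f x \<le> f y" by auto
    moreover obtain y where "y \<in> M" "y \<noteq> x" "dist y x < \<delta>" "f y \<le> f x - ereal (a * dist y x)"
      using H \<open>\<delta> > 0\<close> by blast
    ultimately show False using key by force
  qed
  show ?thesis
    by (rule slope_ge_aux[OF fin(1) nm]) (use H key in metis)
qed

lemma slope_less:
  assumes s: "slope_on f M x < ereal t" and t: "0 < t" and fin: "\<forall>y. f y \<noteq> -\<infinity>"
  shows "f x \<noteq> \<infinity> \<and> (\<exists>r>0. \<forall>y\<in>M. dist y x < r \<longrightarrow> f x - ereal (t * dist y x) \<le> f y)"
proof -
  have fx: "f x \<noteq> \<infinity>" using s by (auto simp: slope_on_def)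
  obtain a where a: "f x = ereal a" using fx fin by (cases "f x") auto
  show ?thesis
  proof (cases "local_min_on f M x")
    case True
    then obtain \<delta> where d: "\<delta> > 0" "\<forall>y\<in>M. dist y x < \<delta> \<longrightarrow> f x \<le> f y"
      unfolding local_min_on_def by auto
    have "f x - ereal (t * dist y x) \<le> f x" for y using a t by simp
    thus ?thesis using fx d by (meson order_trans)
  next
    case False
    hence "Limsup (at x within M) (\<lambda>y. (f x - f y) / ereal (dist x y)) < ereal t"
      using s fx by (simp add: slope_on_def)
    hence "eventually (\<lambda>y. (f x - f y) / ereal (dist x y) < ereal t) (at x within M)"
      by (rule Limsup_lessD)
    then obtain d where d: "d > 0" "\<forall>y\<in>M. y \<noteq> x \<and> dist y x < d \<longrightarrow> (f x - f y) / ereal (dist x y) < ereal t"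
      unfolding eventually_at by auto
    have "f x - ereal (t * dist y x) \<le> f y" if "y \<in> M" "dist y x < d" for y
    proof (cases "y = x")
      case True thus ?thesis using a t by simp
    next
      case False
      have dp: "0 < dist x y" using False by simp
      have r: "(f x - f y) / ereal (dist x y) < ereal t" using d that False by auto
      show ?thesis
      proof (cases "f y")
        case (real b)
        hence "(a - b) / dist x y < t" using r a dp by simp
        hence "a - b < t * dist x y" using dp by (simp add: divide_less_eq)
        thus ?thesis using real a by (simp add: dist_commute)
      next
        case PInf thus ?thesis by simp
      next
        case MInf thus ?thesis using fin by simp
      qed
    qed
    thus ?thesis using fx d by blast
  qed
qed

lemma frechet_slope:
  assumes v: "v \<in> frechet_subdiff f z" and fin: "\<forall>y. f y \<noteq> -\<infinity>"
  shows "slope_on f M z \<le> ereal (norm v)"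
proof (rule ereal_le_epsilon2)
  fix e :: real assume e: "e > 0"
  have fz: "f z \<noteq> \<infinity>" using v by (simp add: frechet_subdiff_def)
  obtain a where a: "f z = ereal a" using fz fin by (cases "f z") auto
  have "0 \<le> Liminf (at z) (\<lambda>y. (f y - f z - ereal (v \<bullet> (y - z))) / ereal (norm (y - z)))"
    using v by (simp add: frechet_subdiff_def)
  hence "eventually (\<lambda>y. ereal (-e) < (f y - f z - ereal (v \<bullet> (y - z))) / ereal (norm (y - z))) (at z)"
    unfolding le_Liminf_iff using e by auto
  then obtain d where d: "d > 0"
    "\<forall>y. y \<noteq> z \<and> dist y z < d \<longrightarrow> ereal (-e) < (f y - f z - ereal (v \<bullet> (y - z))) / ereal (norm (y - z))"
    unfolding eventually_at by auto
  have "slope_on f M z \<le> ereal (norm v + e)"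
  proof (rule slope_le[OF fz fin _ d(1)])
    show "0 \<le> norm v + e" using e by simp
    show "\<forall>y\<in>M. dist y z < d \<longrightarrow> f z - ereal ((norm v + e) * dist y z) \<le> f y"
    proof (intro ballI impI)
      fix y assume y: "y \<in> M" "dist y z < d"
      show "f z - ereal ((norm v + e) * dist y z) \<le> f y"
      proof (cases "y = z")
        case True thus ?thesis using a e by simp
      next
        case False
        have np: "0 < norm (y - z)" using False by simp
        have r: "ereal (-e) < (f y - f z - ereal (v \<bullet> (y - z))) / ereal (norm (y - z))"
          using d False y by auto
        show ?thesis
        proof (cases "f y")
          case (real b)
          hence "-e < (b - a - v \<bullet> (y - z)) / norm (y - z)" using r a np by simp
          hence "-e * norm (y - z) < b - a - v \<bullet> (y - z)" using np by (simp add: less_divide_eq)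
          moreover have "v \<bullet> (y - z) \<ge> - (norm v * norm (y - z))"
            using Cauchy_Schwarz_ineq2[of v "y - z"] by (simp add: abs_le_iff)
          ultimately have "a - (norm v + e) * norm (y - z) \<le> b" by (simp add: algebra_simps)
          thus ?thesis using real a by (simp add: dist_norm)
        next
          case PInf thus ?thesis by simp
        next
          case MInf thus ?thesis using fin by simp
        qed
      qed
    qed
  qed
  thus "slope_on f M z \<le> ereal (norm v) + ereal e" by simp
qed

lemma argmin_frechet:
  assumes x: "x \<in> argmin_set f" and fx: "f x \<noteq> \<infinity>" and fin: "\<forall>y. f y \<noteq> -\<infinity>"
  shows "0 \<in> frechet_subdiff f x"
proof -
  obtain a where a: "f x = ereal a" using fx fin by (cases "f x") auto
  have "eventually (\<lambda>y. 0 \<le> (f y - f x - ereal (0 \<bullet> (y - x))) / ereal (norm (y - x))) (at x)"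
  proof (rule always_eventually, rule allI)
    fix y
    have le: "f x \<le> f y" using x by (simp add: argmin_set_def)
    show "0 \<le> (f y - f x - ereal (0 \<bullet> (y - x))) / ereal (norm (y - x))"
    proof (cases "f y")
      case (real b) thus ?thesis using a le by (simp add: divide_ereal_def)
    next
      case PInf thus ?thesis using a by (cases "norm (y - x) = 0") (auto simp: divide_ereal_def)
    next
      case MInf thus ?thesis using fin by simp
    qed
  qed
  hence "0 \<le> Liminf (at x) (\<lambda>y. (f y - f x - ereal (0 \<bullet> (y - x))) / ereal (norm (y - x)))"
    by (rule Liminf_bounded)
  thus ?thesis using fx fin by (simp add: frechet_subdiff_def)
qed

lemma frechet_limiting:
  assumes "v \<in> frechet_subdiff f x" shows "v \<in> limiting_subdiff f x"
proof -
  have "f x \<noteq> \<infinity> \<and> f x \<noteq> -\<infinity>" using assms by (simp add: frechet_subdiff_def)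
  moreover have "\<exists>xs vs. xs \<longlonglongrightarrow> x \<and> (\<lambda>k. f (xs k)) \<longlonglongrightarrow> f x \<and>
        (\<forall>k. vs k \<in> frechet_subdiff f (xs k)) \<and> vs \<longlonglongrightarrow> v"
    by (rule exI[of _ "\<lambda>k::nat. x"], rule exI[of _ "\<lambda>k::nat. v"]) (use assms in simp)
  ultimately show ?thesis unfolding limiting_subdiff_def by simp
qed

lemma norm_sq_split: "(norm ((a::'a::real_inner) + b))\<^sup>2 = (norm a)\<^sup>2 + 2 * (a \<bullet> b) + (norm b)\<^sup>2"
  by (simp add: power2_norm_eq_inner algebra_simps inner_commute)

lemma fuzzy:
  fixes f :: "'a::euclidean_space \<Rightarrow> ereal"
  assumes cf: "closed_fun f" and fin: "\<forall>y. f y \<noteq> -\<infinity>" and fx: "f x \<noteq> \<infinity>"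
    and t: "t > 0" and \<rho>: "\<rho> > 0"
    and H: "\<forall>y. dist y x \<le> \<rho> \<longrightarrow> f x - ereal (t * dist y x) \<le> f y"
  shows "\<exists>z v. dist z x \<le> \<rho> / 2 \<and> f z \<le> f x \<and> v \<in> frechet_subdiff f z \<and> norm v \<le> 2 * t"
proof -
  define c where "c = 2 * t / \<rho>"
  have c: "c > 0" using t \<rho> by (simp add: c_def)
  obtain a where a: "f x = ereal a" using fx fin by (cases "f x") auto
  obtain z where z: "z \<in> cball x \<rho>"
    "\<forall>y\<in>cball x \<rho>. f z + ereal (c * (norm (z - x))\<^sup>2) \<le> f y + ereal (c * (norm (y - x))\<^sup>2)"
  proof -
    have "continuous_on (cball x \<rho>) (\<lambda>y. c * (norm (y - x))\<^sup>2)" by (intro continuous_intros)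
    moreover have "cball x \<rho> \<noteq> {}" using \<rho> by simp
    ultimately show ?thesis using lsc_min[OF cf compact_cball, of x \<rho> "\<lambda>y. c * (norm (y - x))\<^sup>2"] that by blast
  qed
  have hz: "f z + ereal (c * (norm (z - x))\<^sup>2) \<le> ereal a" using z \<rho> a by (metis add.right_neutral cball_trivial centre_in_cball diff_self less_imp_le norm_zero ereal_mult_zero zero_ereal_def power2_eq_square mult_zero_right)
  obtain b where b: "f z = ereal b" using hz fin by (cases "f z") auto
  have b1: "b + c * (norm (z - x))\<^sup>2 \<le> a" using hz b by simp
  have b2: "a - t * norm (z - x) \<le> b"
  proof -
    have "dist z x \<le> \<rho>" using z(1) by (simp add: dist_commute)
    hence "f x - ereal (t * dist z x) \<le> f z" using H by blast
    thus ?thesis using a b by (simp add: dist_norm)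
  qed
  define d where "d = norm (z - x)"
  have d0: "d \<ge> 0" by (simp add: d_def)
  have "c * d\<^sup>2 \<le> t * d" using b1 b2 by (simp add: d_def)
  hence "d \<le> \<rho> / 2"
  proof (cases "d = 0")
    case False
    hence "c * d \<le> t" using \<open>c * d\<^sup>2 \<le> t * d\<close> d0 by (simp add: power2_eq_square)
    hence "d \<le> t / c" using c by (simp add: le_divide_eq mult.commute)
    thus ?thesis using \<rho> t by (simp add: c_def)
  qed (use \<rho> in simp)
  define v where "v = (2 * c) *\<^sub>R (x - z)"
  have nv: "norm v \<le> 2 * t"
  proof -
    have "norm v = 2 * c * d" using c by (simp add: v_def d_def norm_minus_commute)
    also have "\<dots> \<le> 2 * c * (\<rho> / 2)" using \<open>d \<le> \<rho> / 2\<close> c by simp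
    also have "\<dots> = 2 * t" using \<rho> by (simp add: c_def)
    finally show ?thesis .
  qed
  have fr: "v \<in> frechet_subdiff f z"
  proof -
    have "0 \<le> Liminf (at z) (\<lambda>y. (f y - f z - ereal (v \<bullet> (y - z))) / ereal (norm (y - z)))"
      unfolding le_Liminf_iff
    proof (intro allI impI)
      fix y0 :: ereal assume y0: "y0 < 0"
      show "eventually (\<lambda>y. y0 < (f y - f z - ereal (v \<bullet> (y - z))) / ereal (norm (y - z))) (at z)"
      proof (cases y0)
        case MInf
        have "eventually (\<lambda>y. y \<noteq> z) (at z)" by (simp add: eventually_at_filter)
        thus ?thesis
        proof (rule eventually_mono)
          fix y assume "y \<noteq> z"
          show "y0 < (f y - f z - ereal (v \<bullet> (y - z))) / ereal (norm (y - z))"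
            using MInf b fin \<open>y \<noteq> z\<close> by (cases "f y") (auto simp: divide_ereal_def)
        qed
      next
        case PInf thus ?thesis using y0 by simp
      next
        case (real r)
        have r: "r < 0" using y0 real by simp
        define \<delta> where "\<delta> = min (\<rho> / 2) (- r / c)"
        have \<delta>: "\<delta> > 0" using r c \<rho> by (simp add: \<delta>_def divide_neg_pos)
        show ?thesis unfolding eventually_at
        proof (rule exI[of _ \<delta>], intro conjI[OF \<delta>] allI ballI impI)
          fix y assume y: "y \<noteq> z \<and> dist y z < \<delta>"
          have np: "0 < norm (y - z)" using y by simp
          have "dist y x \<le> dist y z + dist z x" by (rule dist_triangle)
          also have "\<dots> \<le> \<rho>" using y \<open>d \<le> \<rho> / 2\<close> by (simp add: \<delta>_def d_def dist_norm)
          finally have "y \<in> cball x \<rho>" by (simp add: dist_commute)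
          hence hy: "f z + ereal (c * (norm (z - x))\<^sup>2) \<le> f y + ereal (c * (norm (y - x))\<^sup>2)"
            using z by auto
          show "y0 < (f y - f z - ereal (v \<bullet> (y - z))) / ereal (norm (y - z))"
          proof (cases "f y")
            case PInf thus ?thesis using b np real by simp
          next
            case MInf thus ?thesis using fin by simp
          next
            case (real e)
            have he: "b + c * (norm (z - x))\<^sup>2 \<le> e + c * (norm (y - x))\<^sup>2" using hy real b by simp
            have "y - x = (y - z) + (z - x)" by simp
            hence sq: "(norm (y - x))\<^sup>2 = (norm (y - z))\<^sup>2 + 2 * ((y - z) \<bullet> (z - x)) + (norm (z - x))\<^sup>2"
              by (metis norm_sq_split)
            have vi: "v \<bullet> (y - z) = - 2 * c * ((y - z) \<bullet> (z - x))"
              by (simp add: v_def inner_commute algebra_simps inner_diff_left inner_diff_right)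
            have cs: "c * (norm (y - x))\<^sup>2 = c * (norm (y - z))\<^sup>2 + 2 * c * ((y - z) \<bullet> (z - x)) + c * (norm (z - x))\<^sup>2"
              unfolding sq by (simp add: distrib_left)
            have "e - b - v \<bullet> (y - z) \<ge> - c * (norm (y - z))\<^sup>2"
              using he cs vi by linarith
            moreover have "c * norm (y - z) < - r" using y c by (simp add: \<delta>_def dist_norm field_simps)
            hence "(c * norm (y - z)) * norm (y - z) < (- r) * norm (y - z)"
              using np by (rule mult_strict_right_mono)
            hence "c * (norm (y - z))\<^sup>2 < - r * norm (y - z)" by (simp add: power2_eq_square mult.assoc)
            ultimately have "r * norm (y - z) < e - b - v \<bullet> (y - z)" by linarith
            hence "r < (e - b - v \<bullet> (y - z)) / norm (y - z)" using np by (simp add: less_divide_eq)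
            thus ?thesis using real \<open>f y = ereal e\<close> b np \<open>y0 = ereal r\<close> by simp
          qed
        qed
      qed
    qed
    thus ?thesis using b by (simp add: frechet_subdiff_def)
  qed
  have "f z \<le> f x" using b1 a b c by (simp add: add_increasing2 order_trans[OF _ b1])
  thus ?thesis using fr nv \<open>d \<le> \<rho> / 2\<close> by (auto simp: d_def dist_norm)
qed

lemma QG:
  fixes f :: "'a::euclidean_space \<Rightarrow> ereal"
  assumes cf: "closed_fun f" and fin: "\<forall>y. f y \<noteq> -\<infinity>" and xb: "xb \<in> argmin_set f"
    and fxb: "f xb \<noteq> \<infinity>" and e1: "\<epsilon>1 > 0" and m1: "\<mu>1 > 0"
    and EB: "\<forall>x\<in>ball xb \<epsilon>1. ereal (\<mu>1 * infdist x (argmin_set f)) \<le> slope f x"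
    and x: "x \<in> ball xb (\<epsilon>1/2)"
  shows "f xb + ereal (\<mu>1/4 * (infdist x (argmin_set f))\<^sup>2) \<le> f x"
proof -
  define S where "S = argmin_set f"
  define d where "d = infdist x S"
  define \<alpha> where "\<alpha> = \<mu>1 / 4"
  have \<alpha>: "\<alpha> > 0" using m1 by (simp add: \<alpha>_def)
  have d0: "d \<ge> 0" by (simp add: d_def infdist_nonneg)
  have dle: "d \<le> dist x xb" unfolding d_def S_def using xb by (rule infdist_le)
  obtain m where m: "f xb = ereal m" using fxb fin by (cases "f xb") auto
  have minf: "f xb \<le> f y" for y using xb by (simp add: argmin_set_def)
  show ?thesis
  proof (cases "f x")
    case PInf thus ?thesis by simp
  next
    case MInf thus ?thesis using fin by simp
  next
    case (real a)
    show ?thesis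
    proof (rule ccontr)
      assume "\<not> ?thesis"
      hence lt: "a < m + \<alpha> * d\<^sup>2" using real m by (simp add: \<alpha>_def d_def S_def)
      have am: "m \<le> a" using minf[of x] real m by simp
      have dpos: "d > 0"
      proof (rule ccontr)
        assume "\<not> d > 0" hence "d = 0" using d0 by simp
        thus False using lt am by simp
      qed
      define k where "k = 2 * \<alpha> * d"
      have k: "k > 0" using \<alpha> dpos by (simp add: k_def)
      obtain z where z: "z \<in> cball x d"
        "\<forall>y\<in>cball x d. f z + ereal (k * norm (z - x)) \<le> f y + ereal (k * norm (y - x))"
      proof -
        have "continuous_on (cball x d) (\<lambda>y. k * norm (y - x))" by (intro continuous_intros)
        moreover have "cball x d \<noteq> {}" using dpos by simp
        ultimately show ?thesis using lsc_min[OF cf compact_cball, of x d "\<lambda>y. k * norm (y - x)"] that by auto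
      qed
      have hz: "f z + ereal (k * norm (z - x)) \<le> ereal a"
        using z(2)[rule_format, of x] dpos real by simp
      obtain b where b: "f z = ereal b" using hz fin by (cases "f z") auto
      have bm: "m \<le> b" using minf[of z] b m by simp
      have "k * norm (z - x) < \<alpha> * d\<^sup>2" using hz b bm lt by simp
      hence "(\<alpha> * d) * (2 * norm (z - x)) < (\<alpha> * d) * d" by (simp add: k_def power2_eq_square algebra_simps)
      hence "2 * norm (z - x) < d" using \<alpha> dpos by (simp add: mult_less_cancel_left_pos)
      hence zx: "norm (z - x) < d / 2" by simp
      have sl: "slope f z \<le> ereal k"
      proof (rule slope_le[where r = "d/2"])
        show "f z \<noteq> \<infinity>" using b by simp
        show "\<forall>y. f y \<noteq> -\<infinity>" by (rule fin)
        show "0 \<le> k" using k by simp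
        show "0 < d / 2" using dpos by simp
        show "\<forall>y\<in>UNIV. dist y z < d / 2 \<longrightarrow> f z - ereal (k * dist y z) \<le> f y"
        proof (intro ballI impI)
          fix y assume y: "dist y z < d / 2"
          have yx: "norm (y - x) \<le> norm (y - z) + norm (z - x)"
            using norm_triangle_ineq[of "y - z" "z - x"] by simp
          hence "y \<in> cball x d" using y zx by (simp add: dist_norm norm_minus_commute)
          hence hy: "f z + ereal (k * norm (z - x)) \<le> f y + ereal (k * norm (y - x))"
            using z(2) by auto
          show "f z - ereal (k * dist y z) \<le> f y"
          proof (cases "f y")
            case (real c)
            have "b + k * norm (z - x) \<le> c + k * norm (y - x)" using hy real b by simp
            moreover have "k * norm (y - x) \<le> k * norm (y - z) + k * norm (z - x)"
              using yx k by (simp add: distrib_left[symmetric])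
            ultimately have "b - k * norm (y - z) \<le> c" by linarith
            thus ?thesis using real b by (simp add: dist_norm)
          qed (use fin in auto)
        qed
      qed
      have "d \<le> infdist z S + dist x z" unfolding d_def by (rule infdist_triangle)
      hence dz: "d / 2 < infdist z S" using zx by (simp add: dist_norm norm_minus_commute)
      have "dist z xb \<le> dist z x + dist x xb" by (rule dist_triangle)
      moreover have "dist z x < d / 2" using zx by (simp add: dist_norm)
      moreover have "dist x xb < \<epsilon>1 / 2" using x by (simp add: dist_commute)
      ultimately have "dist z xb < \<epsilon>1" using dle e1 by linarith
      hence "z \<in> ball xb \<epsilon>1" by (simp add: dist_commute)
      hence "ereal (\<mu>1 * infdist z S) \<le> slope f z" using EB by (simp add: S_def)
      hence "ereal (\<mu>1 * infdist z S) \<le> ereal k" using sl by (rule order_trans)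
      hence "\<mu>1 * infdist z S \<le> \<mu>1 * (d / 2)" by (simp add: k_def \<alpha>_def)
      hence "infdist z S \<le> d / 2" using m1 by simp
      thus False using dz by simp
    qed
  qed
qed

lemma ii_imp_i:
  fixes f :: "'a::euclidean_space \<Rightarrow> ereal"
  assumes fin: "\<forall>y. f y \<noteq> -\<infinity>" and cf: "closed_fun f" and sc: "subdiff_continuous f"
    and xb: "xb \<in> argmin_set f" and fxb: "f xb \<noteq> \<infinity>" and xbM: "xb \<in> M"
    and \<eta>: "\<eta> > 0" and \<delta>: "\<delta> > 0"
    and sharp: "\<forall>x y. dist x xb < \<delta> \<and> \<bar>f x - f xb\<bar> < ereal \<delta> \<and> x \<notin> M \<and>
         y \<in> limiting_subdiff f x \<longrightarrow> \<eta> \<le> norm y"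
    and e0: "\<epsilon>0 > 0" and m0: "\<mu>0 > 0"
    and ii: "\<forall>x\<in>ball xb \<epsilon>0 \<inter> M. ereal (\<mu>0 * infdist x (argmin_set f \<inter> M)) \<le> slope_on f M x"
  shows "\<exists>\<epsilon>>0. \<exists>\<mu>>0. \<forall>x\<in>ball xb \<epsilon>. ereal (\<mu> * infdist x (argmin_set f)) \<le> slope f x"
proof (rule ccontr)
  assume neg: "\<not> ?thesis"
  define S where "S = argmin_set f"
  define e where "e k = inverse (real (Suc k))" for k
  have epos: "e k > 0" for k by (simp add: e_def)
  have e1: "e k \<le> 1" for k by (simp add: e_def inverse_le_1_iff)
  have elim: "e \<longlonglongrightarrow> 0" unfolding e_def by (rule LIMSEQ_inverse_real_of_nat)
  have "\<forall>k. \<exists>x. x \<in> ball xb (e k) \<and> \<not> ereal (e k * infdist x S) \<le> slope f x"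
  proof
    fix k
    obtain x where "x \<in> ball xb (e k)" "\<not> ereal (e k * infdist x S) \<le> slope f x"
      using neg epos[of k] unfolding S_def by blast
    thus "\<exists>x. x \<in> ball xb (e k) \<and> \<not> ereal (e k * infdist x S) \<le> slope f x" by blast
  qed
  then obtain X where X: "\<And>k. X k \<in> ball xb (e k)" "\<And>k. slope f (X k) < ereal (e k * infdist (X k) S)"
    by (metis not_le)
  define D where "D k = infdist (X k) S" for k
  have Dle: "D k \<le> dist (X k) xb" for k unfolding D_def S_def using xb by (rule infdist_le)
  have Dlt: "D k < e k" for k using Dle[of k] X(1)[of k] by (simp add: dist_commute)
  have Dpos: "D k > 0" for k
  proof -
    have "0 \<le> slope f (X k)" using slope_nonneg[OF fin] .
    hence "ereal 0 < ereal (e k * D k)" using X(2)[of k] unfolding D_def zero_ereal_def by (rule le_less_trans)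
    hence "0 < e k * D k" by simp
    thus ?thesis using epos[of k] by (simp add: zero_less_mult_iff)
  qed
  have "\<forall>k. \<exists>z v. dist z (X k) \<le> D k / 2 \<and> dist z (X k) \<le> e k / 2 \<and> v \<in> frechet_subdiff f z
           \<and> norm v \<le> 2 * (e k * D k)"
  proof
    fix k
    have t: "0 < e k * D k" using epos Dpos by simp
    obtain r where r: "f (X k) \<noteq> \<infinity>" "r > 0"
      "\<forall>y\<in>UNIV. dist y (X k) < r \<longrightarrow> f (X k) - ereal ((e k * D k) * dist y (X k)) \<le> f y"
      using slope_less[OF _ t fin, of UNIV "X k"] X(2)[of k] by (auto simp: D_def)
    define \<rho> where "\<rho> = min (r/2) (min (D k) (e k))"
    have \<rho>: "\<rho> > 0" using r Dpos epos by (simp add: \<rho>_def)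
    have H: "\<forall>y. dist y (X k) \<le> \<rho> \<longrightarrow> f (X k) - ereal ((e k * D k) * dist y (X k)) \<le> f y"
      using r(3) r(2) by (auto simp: \<rho>_def)
    obtain z v where zv: "dist z (X k) \<le> \<rho> / 2" "f z \<le> f (X k)" "v \<in> frechet_subdiff f z"
      "norm v \<le> 2 * (e k * D k)"
      using fuzzy[OF cf fin r(1) t \<rho> H] by blast
    have "dist z (X k) \<le> D k / 2" "dist z (X k) \<le> e k / 2" using zv(1) by (auto simp: \<rho>_def)
    thus "\<exists>z v. dist z (X k) \<le> D k / 2 \<and> dist z (X k) \<le> e k / 2 \<and> v \<in> frechet_subdiff f z
           \<and> norm v \<le> 2 * (e k * D k)" using zv by blast
  qed
  then obtain Z V where ZV: "\<And>k. dist (Z k) (X k) \<le> D k / 2" "\<And>k. dist (Z k) (X k) \<le> e k / 2"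
    "\<And>k. V k \<in> frechet_subdiff f (Z k)" "\<And>k. norm (V k) \<le> 2 * (e k * D k)"
    by metis
  have Zd: "dist (Z k) xb \<le> 2 * e k" for k
  proof -
    have "dist (Z k) xb \<le> dist (Z k) (X k) + dist (X k) xb" by (rule dist_triangle)
    thus ?thesis using ZV(2)[of k] X(1)[of k] epos[of k] by (simp add: dist_commute; linarith)
  qed
  have Zlim: "Z \<longlonglongrightarrow> xb"
  proof -
    have "(\<lambda>k. dist (Z k) xb) \<longlonglongrightarrow> 0"
    proof (rule tendsto_sandwich[of "\<lambda>_. 0" _ _ "\<lambda>k. 2 * e k"])
      show "\<forall>\<^sub>F n in sequentially. 0 \<le> dist (Z n) xb" by simp
      show "\<forall>\<^sub>F n in sequentially. dist (Z n) xb \<le> 2 * e n" using Zd by simp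
      show "(\<lambda>k. 2 * e k) \<longlonglongrightarrow> 0" using tendsto_mult_right_zero[OF elim, of 2] by simp
    qed simp
    thus ?thesis by (rule tendsto_dist_iff[THEN iffD2])
  qed
  have Vlim: "V \<longlonglongrightarrow> 0"
  proof -
    have "(\<lambda>k. norm (V k)) \<longlonglongrightarrow> 0"
    proof (rule tendsto_sandwich[of "\<lambda>_. 0" _ _ "\<lambda>k. 2 * e k"])
      show "\<forall>\<^sub>F n in sequentially. 0 \<le> norm (V n)" by simp
      have "norm (V n) \<le> 2 * e n" for n
      proof -
        have "e n * D n \<le> e n * 1" using Dlt[of n] e1[of n] epos[of n] by (intro mult_left_mono) auto
        thus ?thesis using ZV(4)[of n] by simp
      qed
      thus "\<forall>\<^sub>F n in sequentially. norm (V n) \<le> 2 * e n" by simp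
      show "(\<lambda>k. 2 * e k) \<longlonglongrightarrow> 0" using tendsto_mult_right_zero[OF elim, of 2] by simp
    qed simp
    thus ?thesis by (rule tendsto_norm_zero_iff[THEN iffD1])
  qed
  have z0: "0 \<in> limiting_subdiff f xb"
    by (rule frechet_limiting, rule argmin_frechet[OF xb fxb fin])
  have fZ: "(\<lambda>k. f (Z k)) \<longlonglongrightarrow> f xb"
  proof -
    have "subdiff_continuous_at f xb" using sc by (simp add: subdiff_continuous_def)
    hence "\<forall>xs vs. xs \<longlonglongrightarrow> xb \<and> vs \<longlonglongrightarrow> 0 \<and> (\<forall>k. vs k \<in> limiting_subdiff f (xs k))
       \<longrightarrow> (\<lambda>k. f (xs k)) \<longlonglongrightarrow> f xb" using z0 unfolding subdiff_continuous_at_def by blast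
    hence "Z \<longlonglongrightarrow> xb \<and> V \<longlonglongrightarrow> 0 \<and> (\<forall>k. V k \<in> limiting_subdiff f (Z k))
       \<longrightarrow> (\<lambda>k. f (Z k)) \<longlonglongrightarrow> f xb" by blast
    moreover have "\<forall>k. V k \<in> limiting_subdiff f (Z k)" using ZV(3) frechet_limiting by blast
    ultimately show ?thesis using Zlim Vlim by blast
  qed
  obtain m where m: "f xb = ereal m" using fxb fin by (cases "f xb") auto
  have ev1: "eventually (\<lambda>k. ereal (m - \<delta>) < f (Z k)) sequentially"
    by (rule order_tendstoD(1)[OF fZ]) (use m \<delta> in simp)
  have ev2: "eventually (\<lambda>k. f (Z k) < ereal (m + \<delta>)) sequentially"
    by (rule order_tendstoD(2)[OF fZ]) (use m \<delta> in simp)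
  have ev3: "eventually (\<lambda>k. dist (Z k) xb < min \<delta> \<epsilon>0) sequentially"
  proof -
    have "min \<delta> \<epsilon>0 > 0" using \<delta> e0 by simp
    thus ?thesis using Zlim unfolding tendsto_iff by blast
  qed
  have ev4: "eventually (\<lambda>k. e k < min (\<eta> / 2) (\<mu>0 / 4)) sequentially"
    by (rule order_tendstoD(2)[OF elim]) (use \<eta> m0 in simp)
  obtain k where k: "ereal (m - \<delta>) < f (Z k)" "f (Z k) < ereal (m + \<delta>)" "dist (Z k) xb < min \<delta> \<epsilon>0"
    "e k < min (\<eta> / 2) (\<mu>0 / 4)"
    using eventually_sequentially[THEN iffD1, OF eventually_conj[OF ev1 eventually_conj[OF ev2 eventually_conj[OF ev3 ev4]]]]
    by blast
  have nV: "norm (V k) < \<eta>"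
  proof -
    have "e k * D k \<le> e k * 1" using Dlt[of k] e1[of k] epos[of k] by (intro mult_left_mono) auto
    thus ?thesis using ZV(4)[of k] k(4) by simp
  qed
  show False
  proof (cases "Z k \<in> M")
    case False
    have "\<bar>f (Z k) - f xb\<bar> < ereal \<delta>"
    proof -
      obtain c where c: "f (Z k) = ereal c" using k(1,2) by (cases "f (Z k)") auto
      thus ?thesis using k(1,2) m by simp
    qed
    moreover have "dist (Z k) xb < \<delta>" using k(3) by simp
    ultimately have "\<eta> \<le> norm (V k)" using sharp False frechet_limiting[OF ZV(3)[of k]] by blast
    thus False using nV by simp
  next
    case True
    have sl: "slope_on f M (Z k) \<le> ereal (2 * (e k * D k))"
      using frechet_slope[OF ZV(3)[of k] fin, of M] ZV(4)[of k] by (auto intro: order_trans)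
    have "Z k \<in> ball xb \<epsilon>0 \<inter> M" using k(3) True by (simp add: dist_commute)
    hence "ereal (\<mu>0 * infdist (Z k) (S \<inter> M)) \<le> ereal (2 * (e k * D k))"
      using ii sl unfolding S_def by (meson order_trans)
    hence i1: "\<mu>0 * infdist (Z k) (S \<inter> M) \<le> 2 * (e k * D k)" by simp
    have "infdist (Z k) S \<le> infdist (Z k) (S \<inter> M)"
      by (rule infdist_mono) (use xb xbM in \<open>auto simp: S_def\<close>)
    moreover have "D k \<le> infdist (Z k) S + dist (X k) (Z k)" unfolding D_def by (rule infdist_triangle)
    ultimately have "D k / 2 \<le> infdist (Z k) (S \<inter> M)" using ZV(1)[of k] by (simp add: dist_commute)
    hence "\<mu>0 * (D k / 2) \<le> \<mu>0 * infdist (Z k) (S \<inter> M)" using m0 by simp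
    hence "\<mu>0 * (D k / 2) \<le> 2 * (e k * D k)" using i1 by linarith
    hence "\<mu>0 * D k \<le> (4 * e k) * D k" by (simp add: algebra_simps)
    hence "\<mu>0 \<le> 4 * e k" using Dpos[of k] by simp
    thus False using k(4) by simp
  qed
qed

lemma deriv_Phi:
  fixes g :: "'a::euclidean_space \<Rightarrow> real" and \<psi> :: "'a \<Rightarrow> 'a"
  assumes dpsi: "(\<psi> has_derivative blinfun_apply (\<psi>' (a + t *\<^sub>R v))) (at (a + t *\<^sub>R v))"
    and dg: "(g has_derivative blinfun_apply (g' (\<psi> (a + t *\<^sub>R v)))) (at (\<psi> (a + t *\<^sub>R v)))"
  shows "((\<lambda>t. g (\<psi> (a + t *\<^sub>R v))) has_real_derivative
           blinfun_apply (g' (\<psi> (a + t *\<^sub>R v))) (blinfun_apply (\<psi>' (a + t *\<^sub>R v)) v)) (at t)"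
proof -
  have h1: "((\<lambda>t. a + t *\<^sub>R v) has_derivative (\<lambda>h. h *\<^sub>R v)) (at t)"
    by (auto intro!: derivative_eq_intros)
  have h2: "((\<lambda>t. \<psi> (a + t *\<^sub>R v)) has_derivative (\<lambda>h. blinfun_apply (\<psi>' (a + t *\<^sub>R v)) (h *\<^sub>R v))) (at t)"
    using has_derivative_compose[OF h1 dpsi] .
  have h3: "((\<lambda>t. g (\<psi> (a + t *\<^sub>R v))) has_derivative
      (\<lambda>h. blinfun_apply (g' (\<psi> (a + t *\<^sub>R v))) (blinfun_apply (\<psi>' (a + t *\<^sub>R v)) (h *\<^sub>R v)))) (at t)"
    using has_derivative_compose[OF h2 dg] .
  show ?thesis unfolding has_field_derivative_def
    by (rule has_derivative_eq_rhs[OF h3]) (auto simp: blinfun.scaleR_right)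
qed

lemma deriv_Phi':
  fixes g :: "'a::euclidean_space \<Rightarrow> real" and \<psi> :: "'a \<Rightarrow> 'a"
  assumes dpsi: "(\<psi> has_derivative blinfun_apply (\<psi>' (a + t *\<^sub>R v))) (at (a + t *\<^sub>R v))"
    and ddpsi: "(\<psi>' has_derivative blinfun_apply (\<psi>'' (a + t *\<^sub>R v))) (at (a + t *\<^sub>R v))"
    and ddg: "(g' has_derivative blinfun_apply (g'' (\<psi> (a + t *\<^sub>R v)))) (at (\<psi> (a + t *\<^sub>R v)))"
  shows "((\<lambda>t. blinfun_apply (g' (\<psi> (a + t *\<^sub>R v))) (blinfun_apply (\<psi>' (a + t *\<^sub>R v)) v)) has_real_derivative
           (blinfun_apply (blinfun_apply (g'' (\<psi> (a + t *\<^sub>R v))) (blinfun_apply (\<psi>' (a + t *\<^sub>R v)) v))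
                 (blinfun_apply (\<psi>' (a + t *\<^sub>R v)) v)
            + blinfun_apply (g' (\<psi> (a + t *\<^sub>R v))) (blinfun_apply (blinfun_apply (\<psi>'' (a + t *\<^sub>R v)) v) v))) (at t)"
proof -
  have h1: "((\<lambda>t. a + t *\<^sub>R v) has_derivative (\<lambda>h. h *\<^sub>R v)) (at t)"
    by (auto intro!: derivative_eq_intros)
  have h2: "((\<lambda>t. \<psi> (a + t *\<^sub>R v)) has_derivative (\<lambda>h. blinfun_apply (\<psi>' (a + t *\<^sub>R v)) (h *\<^sub>R v))) (at t)"
    using has_derivative_compose[OF h1 dpsi] .
  have h3: "((\<lambda>t. g' (\<psi> (a + t *\<^sub>R v))) has_derivative
      (\<lambda>h. blinfun_apply (g'' (\<psi> (a + t *\<^sub>R v))) (blinfun_apply (\<psi>' (a + t *\<^sub>R v)) (h *\<^sub>R v)))) (at t)"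
    using has_derivative_compose[OF h2 ddg] .
  have h4: "((\<lambda>t. \<psi>' (a + t *\<^sub>R v)) has_derivative (\<lambda>h. blinfun_apply (\<psi>'' (a + t *\<^sub>R v)) (h *\<^sub>R v))) (at t)"
    using has_derivative_compose[OF h1 ddpsi] .
  have h5: "((\<lambda>t. blinfun_apply (\<psi>' (a + t *\<^sub>R v)) v) has_derivative
      (\<lambda>h. blinfun_apply (blinfun_apply (\<psi>'' (a + t *\<^sub>R v)) (h *\<^sub>R v)) v)) (at t)"
    using blinfun.FDERIV[OF h4 has_derivative_const[of v]] by simp
  note h6 = blinfun.FDERIV[OF h3 h5]
  show ?thesis unfolding has_field_derivative_def
    by (rule has_derivative_eq_rhs[OF h6])
      (auto simp: blinfun.scaleR_right blinfun.scaleR_left algebra_simps)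
qed

definition Eform :: "('a::euclidean_space \<Rightarrow> 'a \<Rightarrow>\<^sub>L real) \<Rightarrow> ('a \<Rightarrow> 'a \<Rightarrow>\<^sub>L 'a \<Rightarrow>\<^sub>L real)
   \<Rightarrow> ('a \<Rightarrow> 'a) \<Rightarrow> ('a \<Rightarrow> 'a \<Rightarrow>\<^sub>L 'a) \<Rightarrow> ('a \<Rightarrow> 'a \<Rightarrow>\<^sub>L 'a \<Rightarrow>\<^sub>L 'a) \<Rightarrow> 'a \<Rightarrow> 'a \<Rightarrow> real" where
  "Eform g' g'' \<psi> \<psi>' \<psi>'' w v =
     blinfun_apply (blinfun_apply (g'' (\<psi> w)) (blinfun_apply (\<psi>' w) v)) (blinfun_apply (\<psi>' w) v)
     + blinfun_apply (g' (\<psi> w)) (blinfun_apply (blinfun_apply (\<psi>'' w) v) v)"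

lemma taylor_step:
  fixes g :: "'a::euclidean_space \<Rightarrow> real" and \<psi> :: "'a \<Rightarrow> 'a"
  assumes seg: "\<forall>t\<in>{0..1}. a + t *\<^sub>R v \<in> B"
    and dpsi: "\<forall>w\<in>B. (\<psi> has_derivative blinfun_apply (\<psi>' w)) (at w)"
    and ddpsi: "\<forall>w\<in>B. (\<psi>' has_derivative blinfun_apply (\<psi>'' w)) (at w)"
    and psiB: "\<forall>w\<in>B. \<psi> w \<in> Ug"
    and dg: "\<forall>y\<in>Ug. (g has_derivative blinfun_apply (g' y)) (at y)"
    and ddg: "\<forall>y\<in>Ug. (g' has_derivative blinfun_apply (g'' y)) (at y)"
    and Eb: "\<forall>w\<in>B. \<bar>Eform g' g'' \<psi> \<psi>' \<psi>'' w v - Eform g' g'' \<psi> \<psi>' \<psi>'' w0 v\<bar> \<le> \<omega> * (norm v)\<^sup>2"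
    and d0: "blinfun_apply (g' (\<psi> a)) (blinfun_apply (\<psi>' a) v) = 0"
  shows "2 * (g (\<psi> (a + v)) - g (\<psi> a)) - 2 * \<omega> * (norm v)\<^sup>2
           \<le> blinfun_apply (g' (\<psi> (a + v))) (blinfun_apply (\<psi>' (a + v)) v)"
proof -
  define P0 where "P0 t = g (\<psi> (a + t *\<^sub>R v))" for t
  define P1 where "P1 t = blinfun_apply (g' (\<psi> (a + t *\<^sub>R v))) (blinfun_apply (\<psi>' (a + t *\<^sub>R v)) v)" for t
  define P2 where "P2 t = Eform g' g'' \<psi> \<psi>' \<psi>'' (a + t *\<^sub>R v) v" for t
  have D0: "DERIV P0 t :> P1 t" if "0 \<le> t" "t \<le> 1" for t
  proof -
    have w: "a + t *\<^sub>R v \<in> B" using seg that by auto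
    show ?thesis unfolding P0_def P1_def
      by (rule deriv_Phi) (use w dpsi dg psiB in auto)
  qed
  have D1: "DERIV P1 t :> P2 t" if "0 \<le> t" "t \<le> 1" for t
  proof -
    have w: "a + t *\<^sub>R v \<in> B" using seg that by auto
    show ?thesis unfolding P1_def P2_def Eform_def
      by (rule deriv_Phi') (use w dpsi ddpsi ddg psiB in auto)
  qed
  define diff where "diff m = (if m = 0 then P0 else if m = 1 then P1 else P2)" for m :: nat
  have "\<exists>t. 0 < t \<and> t < 1 \<and>
      P0 1 = (\<Sum>m<2. (diff m 0 / fact m) * (1 - 0)^m) + (diff 2 t / fact 2) * (1 - 0)^2"
  proof (rule Taylor_up)
    show "diff 0 = P0" by (simp add: diff_def)
    show "\<forall>m t. m < 2 \<and> 0 \<le> t \<and> t \<le> 1 \<longrightarrow> DERIV (diff m) t :> diff (Suc m) t"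
    proof (intro allI impI)
      fix m :: nat and t :: real assume h: "m < 2 \<and> 0 \<le> t \<and> t \<le> 1"
      hence "m = 0 \<or> m = 1" by auto
      thus "DERIV (diff m) t :> diff (Suc m) t" using D0 D1 h by (auto simp: diff_def)
    qed
  qed auto
  then obtain \<xi> where \<xi>: "0 < \<xi>" "\<xi> < 1" "P0 1 = P0 0 + P1 0 + P2 \<xi> / 2"
    by (auto simp: diff_def eval_nat_numeral)
  obtain \<zeta> where \<zeta>: "0 < \<zeta>" "\<zeta> < 1" "P1 1 - P1 0 = (1 - 0) * P2 \<zeta>"
    using MVT2[of 0 1 P1 P2] D1 by auto
  have b1: "P2 \<xi> \<le> Eform g' g'' \<psi> \<psi>' \<psi>'' w0 v + \<omega> * (norm v)\<^sup>2"
    using Eb seg \<xi> unfolding P2_def by (smt (verit, best) atLeastAtMost_iff)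
  have b2: "Eform g' g'' \<psi> \<psi>' \<psi>'' w0 v - \<omega> * (norm v)\<^sup>2 \<le> P2 \<zeta>"
    using Eb seg \<zeta> unfolding P2_def by (smt (verit, best) atLeastAtMost_iff)
  have "P1 0 = 0" using d0 by (simp add: P1_def)
  hence e1: "P1 1 = P2 \<zeta>" using \<zeta>(3) by simp
  have e2: "P0 1 - P0 0 = P2 \<xi> / 2" using \<xi>(3) \<open>P1 0 = 0\<close> by simp
  have "2 * (P0 1 - P0 0) - 2 * (\<omega> * (norm v)\<^sup>2) \<le> P1 1" unfolding e1 e2 using b1 b2 by linarith
  thus ?thesis by (simp add: P0_def P1_def mult.assoc)
qed

lemma bil_bound: "norm (blinfun_apply (blinfun_apply B x) y) \<le> norm B * norm x * norm y"
proof -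
  have "norm (blinfun_apply (blinfun_apply B x) y) \<le> norm (blinfun_apply B x) * norm y" by (rule norm_blinfun)
  also have "\<dots> \<le> norm B * norm x * norm y" by (intro mult_right_mono norm_blinfun) auto
  finally show ?thesis .
qed

lemma E_diff_bound:
  fixes B B0 :: "'a::real_normed_vector \<Rightarrow>\<^sub>L 'a \<Rightarrow>\<^sub>L real" and P P0 :: "'a \<Rightarrow>\<^sub>L 'a"
    and C C0 :: "'a \<Rightarrow>\<^sub>L real" and Q Q0 :: "'a \<Rightarrow>\<^sub>L 'a \<Rightarrow>\<^sub>L 'a"
  shows "\<bar>(B (P v) (P v) + C (Q v v)) - (B0 (P0 v) (P0 v) + C0 (Q0 v v))\<bar>
    \<le> (norm (B - B0) * norm P * norm P + norm B0 * norm (P - P0) * (norm P + norm P0)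
        + norm (C - C0) * norm Q + norm C0 * norm (Q - Q0)) * (norm v)\<^sup>2"
proof -
  define p where "p = P v"
  define p0 where "p0 = P0 v"
  have id: "(B (P v) (P v) + C (Q v v)) - (B0 (P0 v) (P0 v) + C0 (Q0 v v))
     = (B - B0) p p + B0 (p - p0) p + B0 p0 (p - p0) + (C - C0) (Q v v) + C0 ((Q - Q0) v v)"
    by (simp add: p_def p0_def blinfun.diff_left blinfun.diff_right)
  have np: "norm p \<le> norm P * norm v" unfolding p_def by (rule norm_blinfun)
  have np0: "norm p0 \<le> norm P0 * norm v" unfolding p0_def by (rule norm_blinfun)
  have npp: "norm (p - p0) \<le> norm (P - P0) * norm v"
    unfolding p_def p0_def by (metis blinfun.diff_left norm_blinfun)
  have t1: "norm ((B - B0) p p) \<le> norm (B - B0) * norm P * norm P * (norm v)\<^sup>2"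
  proof -
    have "norm ((B - B0) p p) \<le> norm (B - B0) * norm p * norm p" by (rule bil_bound)
    also have "\<dots> \<le> norm (B - B0) * (norm P * norm v) * (norm P * norm v)"
      by (intro mult_mono mult_left_mono np) auto
    finally show ?thesis by (simp add: power2_eq_square algebra_simps)
  qed
  have t2: "norm (B0 (p - p0) p) \<le> norm B0 * norm (P - P0) * norm P * (norm v)\<^sup>2"
  proof -
    have "norm (B0 (p - p0) p) \<le> norm B0 * norm (p - p0) * norm p" by (rule bil_bound)
    also have "\<dots> \<le> norm B0 * (norm (P - P0) * norm v) * (norm P * norm v)"
      by (intro mult_mono mult_left_mono np npp) auto
    finally show ?thesis by (simp add: power2_eq_square algebra_simps)
  qed
  have t3: "norm (B0 p0 (p - p0)) \<le> norm B0 * norm (P - P0) * norm P0 * (norm v)\<^sup>2"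
  proof -
    have "norm (B0 p0 (p - p0)) \<le> norm B0 * norm p0 * norm (p - p0)" by (rule bil_bound)
    also have "\<dots> \<le> norm B0 * (norm P0 * norm v) * (norm (P - P0) * norm v)"
      by (intro mult_mono mult_left_mono np0 npp) auto
    finally show ?thesis by (simp add: power2_eq_square algebra_simps)
  qed
  have t4: "norm ((C - C0) (Q v v)) \<le> norm (C - C0) * norm Q * (norm v)\<^sup>2"
  proof -
    have "norm ((C - C0) (Q v v)) \<le> norm (C - C0) * norm (Q v v)" by (rule norm_blinfun)
    also have "\<dots> \<le> norm (C - C0) * (norm Q * norm v * norm v)"
      by (intro mult_left_mono bil_bound) auto
    finally show ?thesis by (simp add: power2_eq_square algebra_simps)
  qed
  have t5: "norm (C0 ((Q - Q0) v v)) \<le> norm C0 * norm (Q - Q0) * (norm v)\<^sup>2"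
  proof -
    have "norm (C0 ((Q - Q0) v v)) \<le> norm C0 * norm ((Q - Q0) v v)" by (rule norm_blinfun)
    also have "\<dots> \<le> norm C0 * (norm (Q - Q0) * norm v * norm v)"
      by (intro mult_left_mono bil_bound) auto
    finally show ?thesis by (simp add: power2_eq_square algebra_simps)
  qed
  have "\<bar>(B - B0) p p + B0 (p - p0) p + B0 p0 (p - p0) + (C - C0) (Q v v) + C0 ((Q - Q0) v v)\<bar>
     \<le> norm ((B - B0) p p) + norm (B0 (p - p0) p) + norm (B0 p0 (p - p0)) + norm ((C - C0) (Q v v))
        + norm (C0 ((Q - Q0) v v))" by simp
  also have "\<dots> \<le> (norm (B - B0) * norm P * norm P + norm B0 * norm (P - P0) * (norm P + norm P0)
        + norm (C - C0) * norm Q + norm C0 * norm (Q - Q0)) * (norm v)\<^sup>2"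
    using t1 t2 t3 t4 t5 by (simp add: algebra_simps)
  finally show ?thesis using id by simp
qed

lemma E_cont:
  fixes g' :: "'a::euclidean_space \<Rightarrow> 'a \<Rightarrow>\<^sub>L real"
  assumes c1: "isCont (\<lambda>w. g'' (\<psi> w)) w0" and c2: "isCont \<psi>' w0"
    and c3: "isCont (\<lambda>w. g' (\<psi> w)) w0" and c4: "isCont \<psi>'' w0" and \<omega>: "\<omega> > 0"
  shows "\<exists>r>0. \<forall>w\<in>ball w0 r. \<forall>v. \<bar>Eform g' g'' \<psi> \<psi>' \<psi>'' w v - Eform g' g'' \<psi> \<psi>' \<psi>'' w0 v\<bar> \<le> \<omega> * (norm v)\<^sup>2"
proof -
  define K where "K w = norm (g'' (\<psi> w) - g'' (\<psi> w0)) * norm (\<psi>' w) * norm (\<psi>' w)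
     + norm (g'' (\<psi> w0)) * norm (\<psi>' w - \<psi>' w0) * (norm (\<psi>' w) + norm (\<psi>' w0))
     + norm (g' (\<psi> w) - g' (\<psi> w0)) * norm (\<psi>'' w) + norm (g' (\<psi> w0)) * norm (\<psi>'' w - \<psi>'' w0)" for w
  have "isCont K w0" unfolding K_def using c1 c2 c3 c4 by (intro continuous_intros) auto
  moreover have "K w0 = 0" by (simp add: K_def)
  ultimately obtain r where r: "r > 0" "\<forall>w. dist w w0 < r \<longrightarrow> dist (K w) 0 < \<omega>"
    using \<omega> unfolding continuous_at_eps_delta by metis
  show ?thesis
  proof (intro exI[of _ r] conjI r(1) ballI allI)
    fix w v assume w: "w \<in> ball w0 r"
    have Kw: "K w \<le> \<omega>" using r(2) w by (auto simp: dist_commute)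
    have "\<bar>Eform g' g'' \<psi> \<psi>' \<psi>'' w v - Eform g' g'' \<psi> \<psi>' \<psi>'' w0 v\<bar> \<le> K w * (norm v)\<^sup>2"
      unfolding Eform_def K_def by (rule E_diff_bound)
    also have "\<dots> \<le> \<omega> * (norm v)\<^sup>2" using Kw by (intro mult_right_mono) auto
    finally show "\<bar>Eform g' g'' \<psi> \<psi>' \<psi>'' w v - Eform g' g'' \<psi> \<psi>' \<psi>'' w0 v\<bar> \<le> \<omega> * (norm v)\<^sup>2" .
  qed
qed

lemma local_lip:
  fixes F :: "'a::euclidean_space \<Rightarrow> 'b::euclidean_space"
  assumes U: "open U" "p \<in> U" and dF: "\<forall>x\<in>U. (F has_derivative blinfun_apply (F' x)) (at x)"
    and cF: "isCont F' p"
  shows "\<exists>r>0. \<exists>L>0. ball p r \<subseteq> U \<and> (\<forall>x\<in>ball p r. \<forall>y\<in>ball p r. norm (F x - F y) \<le> L * norm (x - y))"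
proof -
  obtain r1 where r1: "r1 > 0" "ball p r1 \<subseteq> U" using U open_contains_ball by blast
  obtain r2 where r2: "r2 > 0" "\<forall>x. dist x p < r2 \<longrightarrow> dist (F' x) (F' p) < 1"
    using cF unfolding continuous_at_eps_delta by (meson zero_less_one)
  define r where "r = min r1 r2"
  define L where "L = norm (F' p) + 1"
  have r: "r > 0" using r1 r2 by (simp add: r_def)
  have sub: "ball p r \<subseteq> U" using r1 by (auto simp: r_def)
  have "norm (F x - F y) \<le> L * norm (x - y)" if x: "x \<in> ball p r" and y: "y \<in> ball p r" for x y
  proof (rule differentiable_bound[OF convex_ball _ _ x y])
    fix z assume z: "z \<in> ball p r"
    show "(F has_derivative blinfun_apply (F' z)) (at z within ball p r)"
      using dF sub z by (meson has_derivative_at_withinI subsetD)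
    have "dist (F' z) (F' p) < 1" using r2 z by (auto simp: r_def dist_commute)
    hence "norm (F' z) \<le> L" unfolding L_def dist_norm using norm_triangle_ineq2[of "F' z" "F' p"] by linarith
    thus "onorm (blinfun_apply (F' z)) \<le> L" by (simp add: norm_blinfun.rep_eq)
  qed
  moreover have "L > 0" by (simp add: L_def add_nonneg_pos)
  ultimately show ?thesis using r sub by blast
qed

lemma chart_core:
  fixes f :: "'a::euclidean_space \<Rightarrow> ereal" and g :: "'a \<Rightarrow> real" and \<psi> \<phi> :: "'a \<Rightarrow> 'a"
  assumes fin: "\<forall>y. f y \<noteq> -\<infinity>" and rr: "rr > 0"
    and Lpsi: "L\<psi> > 0" "\<forall>a\<in>ball wc rr. \<forall>b\<in>ball wc rr. norm (\<psi> a - \<psi> b) \<le> L\<psi> * norm (a - b)"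
    and BM: "\<forall>w\<in>ball wc rr \<inter> L. \<psi> w \<in> M \<and> f (\<psi> w) = ereal (g (\<psi> w))"
    and phipsi: "\<forall>w\<in>ball wc rr. \<phi> (\<psi> w) = w"
    and dpsi: "\<forall>w\<in>ball wc rr. (\<psi> has_derivative blinfun_apply (\<psi>' w)) (at w)"
    and ddpsi: "\<forall>w\<in>ball wc rr. (\<psi>' has_derivative blinfun_apply (\<psi>'' w)) (at w)"
    and psiB: "\<forall>w\<in>ball wc rr. \<psi> w \<in> Ug"
    and dg: "\<forall>y\<in>Ug. (g has_derivative blinfun_apply (g' y)) (at y)"
    and ddg: "\<forall>y\<in>Ug. (g' has_derivative blinfun_apply (g'' y)) (at y)"
    and Eb: "\<forall>w\<in>ball wc rr. \<forall>v. \<bar>Eform g' g'' \<psi> \<psi>' \<psi>'' w v - Eform g' g'' \<psi> \<psi>' \<psi>'' wc v\<bar> \<le> (c/2) * (norm v)\<^sup>2"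
    and L: "subspace L" and minf: "\<forall>y. ereal m \<le> f y"
    and x': "x' \<in> ball wc rr \<inter> L" and s': "s' \<in> ball wc rr \<inter> L"
    and sS: "\<psi> s' \<in> argmin_set f \<inter> M" and fs: "f (\<psi> s') = ereal m"
    and c: "c > 0" and QGv: "c * (norm (x' - s'))\<^sup>2 \<le> g (\<psi> x') - m"
  shows "ereal ((c / (2 * L\<psi>\<^sup>2)) * infdist (\<psi> x') (argmin_set f \<inter> M)) \<le> slope_on f M (\<psi> x')"
proof -
  define B where "B = ball wc rr"
  define v where "v = x' - s'"
  define x where "x = \<psi> x'"
  define s where "s = \<psi> s'"
  define \<Phi> where "\<Phi> t = g (\<psi> (s' + t *\<^sub>R v))" for t
  have vL: "v \<in> L" using x' s' L by (simp add: v_def subspace_diff)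
  have inL: "s' + t *\<^sub>R v \<in> L" for t using vL s' L by (simp add: subspace_add subspace_scale)
  have seg: "\<forall>t\<in>{0..1}. s' + t *\<^sub>R v \<in> B"
  proof
    fix t :: real assume t: "t \<in> {0..1}"
    have "(1 - t) *\<^sub>R s' + t *\<^sub>R x' \<in> B" unfolding B_def
      by (rule convexD_alt[OF convex_ball]) (use x' s' t in auto)
    moreover have "(1 - t) *\<^sub>R s' + t *\<^sub>R x' = s' + t *\<^sub>R v"
      by (simp add: v_def algebra_simps)
    ultimately show "s' + t *\<^sub>R v \<in> B" by simp
  qed
  have fPhi: "f (\<psi> (s' + t *\<^sub>R v)) = ereal (\<Phi> t)" if "s' + t *\<^sub>R v \<in> B" for t
    using BM that inL by (simp add: B_def \<Phi>_def)
  have gs: "g s = m" using BM s' fs by (simp add: s_def)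
  have Phi0: "\<Phi> 0 = m" using gs by (simp add: \<Phi>_def s_def)
  have x'eq: "s' + v = x'" by (simp add: v_def)
  have Phi1: "\<Phi> 1 = g x" by (simp add: \<Phi>_def x_def x'eq)
  have fx: "f x = ereal (g x)" using BM x' by (simp add: x_def)
  have derPhi: "DERIV \<Phi> t :> blinfun_apply (g' (\<psi> (s' + t *\<^sub>R v))) (blinfun_apply (\<psi>' (s' + t *\<^sub>R v)) v)"
    if "s' + t *\<^sub>R v \<in> B" for t
    unfolding \<Phi>_def by (rule deriv_Phi) (use that dpsi dg psiB in \<open>auto simp: B_def\<close>)
  have d0: "blinfun_apply (g' (\<psi> s')) (blinfun_apply (\<psi>' s') v) = 0"
  proof -
    define \<tau> where "\<tau> = (rr - dist s' wc) / (norm v + 1)"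
    have nv1: "norm v + 1 > 0" by (simp add: add_nonneg_pos)
    moreover have "rr - dist s' wc > 0" using s' by (simp add: dist_commute)
    ultimately have \<tau>: "\<tau> > 0" by (simp add: \<tau>_def)
    have D: "DERIV \<Phi> 0 :> blinfun_apply (g' (\<psi> s')) (blinfun_apply (\<psi>' s') v)"
      using derPhi[of 0] s' by (simp add: B_def)
    have "\<forall>t. \<bar>0 - t\<bar> < \<tau> \<longrightarrow> \<Phi> 0 \<le> \<Phi> t"
    proof (intro allI impI)
      fix t :: real assume t: "\<bar>0 - t\<bar> < \<tau>"
      have "\<bar>t\<bar> * norm v \<le> \<bar>t\<bar> * (norm v + 1)" by (simp add: mult_left_mono)
      also have "\<dots> < \<tau> * (norm v + 1)" using t nv1 by (intro mult_strict_right_mono) auto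
      also have "\<dots> = rr - dist s' wc" using nv1 by (simp add: \<tau>_def)
      finally have "\<bar>t\<bar> * norm v < rr - dist s' wc" .
      moreover have "dist (s' + t *\<^sub>R v) wc \<le> dist s' wc + \<bar>t\<bar> * norm v"
        using dist_triangle[of "s' + t *\<^sub>R v" wc s'] by (simp add: dist_norm)
      ultimately have "s' + t *\<^sub>R v \<in> B" by (simp add: B_def dist_commute)
      hence "ereal m \<le> ereal (\<Phi> t)" using minf fPhi by metis
      thus "\<Phi> 0 \<le> \<Phi> t" using Phi0 by simp
    qed
    thus ?thesis using DERIV_local_min[OF D \<tau>] by simp
  qed
  have ts: "2 * (g (\<psi> (s' + v)) - g (\<psi> s')) - 2 * (c/2) * (norm v)\<^sup>2
           \<le> blinfun_apply (g' (\<psi> (s' + v))) (blinfun_apply (\<psi>' (s' + v)) v)"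
  proof (rule taylor_step[of s' v B \<psi> \<psi>' \<psi>'' Ug g g' g'' wc "c/2"])
    show "\<forall>t\<in>{0..1}. s' + t *\<^sub>R v \<in> B" by (rule seg)
    show "\<forall>w\<in>B. (\<psi> has_derivative blinfun_apply (\<psi>' w)) (at w)" using dpsi by (simp add: B_def)
    show "\<forall>w\<in>B. (\<psi>' has_derivative blinfun_apply (\<psi>'' w)) (at w)" using ddpsi by (simp add: B_def)
    show "\<forall>w\<in>B. \<psi> w \<in> Ug" using psiB by (simp add: B_def)
    show "\<forall>w\<in>B. \<bar>Eform g' g'' \<psi> \<psi>' \<psi>'' w v - Eform g' g'' \<psi> \<psi>' \<psi>'' wc v\<bar> \<le> c / 2 * (norm v)\<^sup>2"
      using Eb by (simp add: B_def)
  qed (use dg ddg d0 in auto)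
  define Dd where "Dd = blinfun_apply (g' (\<psi> x')) (blinfun_apply (\<psi>' x') v)"
  have Dd: "c * (norm v)\<^sup>2 \<le> Dd"
    using ts QGv gs unfolding Dd_def x'eq by (simp add: v_def s_def)
  have sSM: "s \<in> argmin_set f \<inter> M" using sS by (simp add: s_def)
  have idist: "infdist x (argmin_set f \<inter> M) \<le> L\<psi> * norm v"
  proof -
    have "infdist x (argmin_set f \<inter> M) \<le> dist x s" using sSM by (rule infdist_le)
    also have "\<dots> \<le> L\<psi> * norm v" using Lpsi(2) x' s' by (simp add: x_def s_def v_def dist_norm)
    finally show ?thesis .
  qed
  show ?thesis
  proof (cases "v = 0")
    case True
    hence "x = s" by (simp add: v_def x_def s_def)
    hence "infdist x (argmin_set f \<inter> M) = 0" using sSM by simp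
    thus ?thesis using slope_nonneg[OF fin] by (simp add: x_def zero_ereal_def)
  next
    case False
    have nv: "norm v > 0" using False by simp
    have Ddpos: "Dd > 0" using Dd nv c by (smt (verit) mult_pos_pos zero_less_power)
    define a where "a = Dd / (2 * L\<psi> * norm v)"
    have apos: "a > 0" using Ddpos Lpsi nv by (simp add: a_def)
    have D1: "DERIV \<Phi> 1 :> Dd"
      using derPhi[of 1] x' by (simp add: B_def Dd_def x'eq)
    obtain h0 where h0: "h0 > 0" "\<forall>h. h \<noteq> 0 \<and> norm (h - 0) < h0 \<longrightarrow> norm ((\<Phi> (1 + h) - \<Phi> 1) / h - Dd) < Dd / 2"
      using LIM_D[OF DERIV_D[OF D1], of "Dd/2"] Ddpos by auto
    have sl: "ereal a \<le> slope_on f M x"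
    proof (rule slope_ge[OF _ fin apos])
      show "f x \<noteq> \<infinity>" using fx by simp
      show "\<forall>\<delta>>0. \<exists>y\<in>M. y \<noteq> x \<and> dist y x < \<delta> \<and> f y \<le> f x - ereal (a * dist y x)"
      proof (intro allI impI)
        fix \<delta> :: real assume \<delta>: "\<delta> > 0"
        define k where "k = min (h0/2) (min (1/2) (\<delta> / (2 * L\<psi> * norm v)))"
        have k: "k > 0" "k \<le> 1/2" "k < h0" "k \<le> \<delta> / (2 * L\<psi> * norm v)"
        proof -
          have "\<delta> / (2 * L\<psi> * norm v) > 0" using \<delta> Lpsi nv by simp
          thus "k > 0" using h0 by (simp add: k_def)
          show "k \<le> 1/2" "k \<le> \<delta> / (2 * L\<psi> * norm v)" by (simp_all add: k_def)
          show "k < h0" using h0 by (simp add: k_def)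
        qed
        define t where "t = 1 - k"
        have t01: "t \<in> {0..1}" using k by (simp add: t_def)
        have tB: "s' + t *\<^sub>R v \<in> B" using seg t01 by blast
        define y where "y = \<psi> (s' + t *\<^sub>R v)"
        have yM: "y \<in> M" using BM tB inL by (simp add: B_def y_def)
        have fy: "f y = ereal (\<Phi> t)" using fPhi[OF tB] by (simp add: y_def)
        have yx: "y \<noteq> x"
        proof
          assume "y = x"
          hence "\<phi> y = \<phi> x" by simp
          hence "s' + t *\<^sub>R v = x'" using phipsi tB x' by (simp add: y_def x_def B_def)
          hence "s' + t *\<^sub>R v = s' + v" using x'eq by simp
          hence "t *\<^sub>R v = v" by simp
          hence "(1 - t) *\<^sub>R v = 0" by (simp add: scaleR_diff_left)
          thus False using False k by (simp add: t_def)
        qed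
        have dyx: "dist y x \<le> L\<psi> * (k * norm v)"
        proof -
          have "dist y x = norm (\<psi> (s' + t *\<^sub>R v) - \<psi> x')" by (simp add: y_def x_def dist_norm)
          also have "\<dots> \<le> L\<psi> * norm ((s' + t *\<^sub>R v) - x')" using Lpsi(2) tB x' by (simp add: B_def)
          also have "(s' + t *\<^sub>R v) - x' = (- k) *\<^sub>R v" by (simp add: t_def v_def algebra_simps)
          finally show ?thesis using k by simp
        qed
        have "L\<psi> * (k * norm v) \<le> L\<psi> * ((\<delta> / (2 * L\<psi> * norm v)) * norm v)"
          using k Lpsi nv by (intro mult_left_mono mult_right_mono) auto
        also have "\<dots> = \<delta> / 2" using Lpsi nv by (simp add: field_simps)
        finally have dlt: "dist y x < \<delta>" using dyx \<delta> by linarith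
        have "norm ((\<Phi> (1 + (-k)) - \<Phi> 1) / (-k) - Dd) < Dd / 2"
          by (rule h0(2)[rule_format]) (use k in auto)
        moreover have "(\<Phi> (1 + (-k)) - \<Phi> 1) / (-k) = (\<Phi> 1 - \<Phi> t) / k"
          by (simp add: t_def divide_simps)
        ultimately have "\<bar>(\<Phi> 1 - \<Phi> t) / k - Dd\<bar> < Dd / 2" by simp
        hence "Dd / 2 < (\<Phi> 1 - \<Phi> t) / k" by linarith
        hence "Dd / 2 * k < \<Phi> 1 - \<Phi> t" using k by (simp add: less_divide_eq)
        moreover have "a * dist y x \<le> a * (L\<psi> * (k * norm v))" using dyx apos by simp
        moreover have "a * (L\<psi> * (k * norm v)) = Dd / 2 * k" using Lpsi nv by (simp add: a_def field_simps)
        ultimately have "\<Phi> t \<le> g x - a * dist y x" using Phi1 by linarith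
        hence "f y \<le> f x - ereal (a * dist y x)" using fy fx by simp
        thus "\<exists>y\<in>M. y \<noteq> x \<and> dist y x < \<delta> \<and> f y \<le> f x - ereal (a * dist y x)"
          using yM yx dlt by blast
      qed
    qed
    have "(c / (2 * L\<psi>\<^sup>2)) * infdist x (argmin_set f \<inter> M) \<le> (c / (2 * L\<psi>\<^sup>2)) * (L\<psi> * norm v)"
      using idist c by (intro mult_left_mono) auto
    also have "\<dots> = c * (norm v)\<^sup>2 / (2 * L\<psi> * norm v)" using Lpsi nv by (simp add: field_simps power2_eq_square)
    also have "\<dots> \<le> a" unfolding a_def using Dd Lpsi nv by (intro divide_right_mono) auto
    finally have "ereal ((c / (2 * L\<psi>\<^sup>2)) * infdist x (argmin_set f \<inter> M)) \<le> ereal a" by simp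
    thus ?thesis using sl unfolding x_def by (rule order_trans)
  qed
qed

lemma i_imp_ii:
  fixes f :: "'a::euclidean_space \<Rightarrow> ereal"
  assumes fin: "\<forall>y. f y \<noteq> -\<infinity>" and cf: "closed_fun f" and xb: "xb \<in> argmin_set f"
    and idm: "identifiable_manifold f M xb"
    and e1: "\<epsilon>1 > 0" and m1: "\<mu>1 > 0"
    and EB: "\<forall>x\<in>ball xb \<epsilon>1. ereal (\<mu>1 * infdist x (argmin_set f)) \<le> slope f x"
  shows "\<exists>\<epsilon>>0. \<exists>\<mu>>0. \<forall>x\<in>ball xb \<epsilon> \<inter> M. ereal (\<mu> * infdist x (argmin_set f \<inter> M)) \<le> slope_on f M x"
proof -
  define S where "S = argmin_set f"
  have fxb: "f xb \<noteq> \<infinity>" and xbM: "xb \<in> M" using idm by (auto simp: identifiable_manifold_def)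
  obtain \<eta> \<delta> where \<eta>: "\<eta> > 0" and \<delta>: "\<delta> > 0" and sharp: "\<forall>x y. dist x xb < \<delta> \<and> \<bar>f x - f xb\<bar> < ereal \<delta> \<and> x \<notin> M \<and>
         y \<in> limiting_subdiff f x \<longrightarrow> \<eta> \<le> norm y"
    using idm unfolding identifiable_manifold_def by blast
  obtain U V \<phi> \<psi> L where U: "open U" "xb \<in> U" and V: "open V" and L: "subspace L"
    and C\<phi>: "C2_on U (\<phi> :: 'a \<Rightarrow> 'a)" and C\<psi>: "C2_on V \<psi>"
    and UV: "\<forall>x\<in>U. \<phi> x \<in> V \<and> \<psi> (\<phi> x) = x" and VU: "\<forall>y\<in>V. \<psi> y \<in> U \<and> \<phi> (\<psi> y) = y"
    and img: "\<phi> ` (M \<inter> U) = V \<inter> L"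
    using idm unfolding identifiable_manifold_def C2_submanifold_around_def by blast
  obtain Ug g where Ug: "open Ug" "xb \<in> Ug" and Cg: "C2_on Ug (g :: 'a \<Rightarrow> real)"
    and fg: "\<forall>x\<in>M \<inter> Ug. f x = ereal (g x)"
    using idm unfolding identifiable_manifold_def C2_restriction_around_def by blast
  obtain \<phi>' \<phi>'' where d\<phi>: "\<forall>x\<in>U. (\<phi> has_derivative blinfun_apply (\<phi>' x)) (at x)"
    and dd\<phi>: "\<forall>x\<in>U. (\<phi>' has_derivative blinfun_apply (\<phi>'' x)) (at x)"
    using C\<phi> unfolding C2_on_def by blast
  obtain \<psi>' \<psi>'' where d\<psi>: "\<forall>x\<in>V. (\<psi> has_derivative blinfun_apply (\<psi>' x)) (at x)"
    and dd\<psi>: "\<forall>x\<in>V. (\<psi>' has_derivative blinfun_apply (\<psi>'' x)) (at x)"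
    and c\<psi>: "continuous_on V \<psi>''"
    using C\<psi> unfolding C2_on_def by blast
  obtain g' g'' where dg: "\<forall>x\<in>Ug. (g has_derivative blinfun_apply (g' x)) (at x)"
    and ddg: "\<forall>x\<in>Ug. (g' has_derivative blinfun_apply (g'' x)) (at x)"
    and cg: "continuous_on Ug g''"
    using Cg unfolding C2_on_def by blast
  obtain m where m: "f xb = ereal m" using fxb fin by (cases "f xb") auto
  have minf: "\<forall>y. ereal m \<le> f y" using xb m by (auto simp: argmin_set_def)
  have Seq: "S = {x. f x \<le> ereal m}"
  proof (intro set_eqI iffI)
    fix x assume "x \<in> S" thus "x \<in> {x. f x \<le> ereal m}" using m by (auto simp: S_def argmin_set_def) (metis)
  next
    fix x assume "x \<in> {x. f x \<le> ereal m}" thus "x \<in> S" using minf by (auto simp: S_def argmin_set_def intro: order_trans)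
  qed
  have Scl: "closed S" unfolding Seq by (rule closed_fun_sublevel[OF cf])
  have Sne: "S \<noteq> {}" using xb by (auto simp: S_def)
  have fS: "f s = ereal m" if "s \<in> S" for s using that minf Seq by (auto intro: antisym)
  have SM: "s \<in> M" if "s \<in> S" "dist s xb < \<delta>" for s
  proof (rule ccontr)
    assume nM: "s \<notin> M"
    have "0 \<in> frechet_subdiff f s" using argmin_frechet[of s f] that fS fin by (simp add: S_def)
    hence "0 \<in> limiting_subdiff f s" by (rule frechet_limiting)
    moreover have "\<bar>f s - f xb\<bar> < ereal \<delta>" using fS[OF that(1)] m \<delta> by simp
    ultimately have "\<eta> \<le> norm (0::'a)" using sharp that(2) nM by blast
    thus False using \<eta> by simp
  qed
  have QGf: "f xb + ereal (\<mu>1/4 * (infdist x S)\<^sup>2) \<le> f x" if "x \<in> ball xb (\<epsilon>1/2)" for x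
    using QG[OF cf fin xb fxb e1 m1 EB that] by (simp add: S_def)
  have c\<phi>': "isCont \<phi>' xb" using dd\<phi> U by (meson has_derivative_continuous)
  obtain r\<phi> L\<phi> where r\<phi>: "r\<phi> > 0" "L\<phi> > 0" "ball xb r\<phi> \<subseteq> U"
    "\<forall>x\<in>ball xb r\<phi>. \<forall>y\<in>ball xb r\<phi>. norm (\<phi> x - \<phi> y) \<le> L\<phi> * norm (x - y)"
    using local_lip[OF U d\<phi> c\<phi>'] by blast
  define w0 where "w0 = \<phi> xb"
  have w0V: "w0 \<in> V" and \<psi>w0: "\<psi> w0 = xb" using UV U by (auto simp: w0_def)
  have c\<psi>': "isCont \<psi>' w0" using dd\<psi> w0V by (meson has_derivative_continuous)
  obtain r\<psi> L\<psi> where r\<psi>: "r\<psi> > 0" "L\<psi> > 0" "ball w0 r\<psi> \<subseteq> V"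
    "\<forall>x\<in>ball w0 r\<psi>. \<forall>y\<in>ball w0 r\<psi>. norm (\<psi> x - \<psi> y) \<le> L\<psi> * norm (x - y)"
    using local_lip[OF V w0V d\<psi> c\<psi>'] by blast
  define c where "c = (\<mu>1 / 4) / L\<phi>\<^sup>2"
  have c: "c > 0" using m1 r\<phi> by (simp add: c_def)
  have cont\<psi>: "isCont \<psi> w0" using d\<psi> w0V by (meson has_derivative_continuous)
  have cg'': "isCont g'' xb" using cg Ug by (simp add: continuous_on_eq_continuous_at)
  have cg': "isCont g' xb" using ddg Ug by (meson has_derivative_continuous)
  have i1: "isCont (\<lambda>w. g'' (\<psi> w)) w0" by (rule isCont_o2[OF cont\<psi>]) (simp add: \<psi>w0 cg'')
  have i3: "isCont (\<lambda>w. g' (\<psi> w)) w0" by (rule isCont_o2[OF cont\<psi>]) (simp add: \<psi>w0 cg')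
  have i4: "isCont \<psi>'' w0" using c\<psi> V w0V by (simp add: continuous_on_eq_continuous_at)
  have "c / 2 > 0" using c by simp
  from E_cont[where g'=g' and g''=g'' and \<psi>=\<psi> and \<psi>'=\<psi>' and \<psi>''=\<psi>'' and \<omega>="c/2", OF i1 c\<psi>' i3 i4 this] obtain rE where rE: "rE > 0"
    "\<forall>w\<in>ball w0 rE. \<forall>v. \<bar>Eform g' g'' \<psi> \<psi>' \<psi>'' w v - Eform g' g'' \<psi> \<psi>' \<psi>'' w0 v\<bar> \<le> c / 2 * (norm v)\<^sup>2"
    by blast
  obtain eU where eU: "eU > 0" "ball xb eU \<subseteq> Ug" using Ug open_contains_ball by blast
  obtain rU where rU: "rU > 0" "\<forall>w. dist w w0 < rU \<longrightarrow> dist (\<psi> w) (\<psi> w0) < eU"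
    using cont\<psi> eU(1) unfolding continuous_at_eps_delta by blast
  define r2 where "r2 = min r\<psi> (min rE rU)"
  have r2: "r2 > 0" using r\<psi> rE rU by (simp add: r2_def)
  have B\<psi>: "ball w0 r2 \<subseteq> ball w0 r\<psi>" by (auto simp: r2_def)
  have BV: "ball w0 r2 \<subseteq> V" using B\<psi> r\<psi>(3) by blast
  have psiB: "\<forall>w\<in>ball w0 r2. \<psi> w \<in> Ug"
  proof
    fix w assume "w \<in> ball w0 r2"
    hence "dist w w0 < rU" by (simp add: r2_def dist_commute)
    hence "dist (\<psi> w) xb < eU" using rU \<psi>w0 by metis
    thus "\<psi> w \<in> Ug" using eU by (auto simp: dist_commute)
  qed
  have BM: "\<forall>w\<in>ball w0 r2 \<inter> L. \<psi> w \<in> M \<and> f (\<psi> w) = ereal (g (\<psi> w))"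
  proof
    fix w assume w: "w \<in> ball w0 r2 \<inter> L"
    hence "w \<in> V \<inter> L" using BV by auto
    then obtain p where p: "p \<in> M \<inter> U" "w = \<phi> p" using img by (metis imageE)
    have "\<psi> w = p" using p UV by simp
    hence "\<psi> w \<in> M" using p by simp
    moreover have "\<psi> w \<in> Ug" using psiB w by auto
    ultimately show "\<psi> w \<in> M \<and> f (\<psi> w) = ereal (g (\<psi> w))" using fg by auto
  qed
  define \<epsilon> where "\<epsilon> = min (\<epsilon>1/2) (min (r\<phi>/2) (min (\<delta>/2) (r2 / (2 * L\<phi>))))"
  have "r2 / (2 * L\<phi>) > 0" using r2 r\<phi> by simp
  hence \<epsilon>: "\<epsilon> > 0" using e1 r\<phi> \<delta> by (simp add: \<epsilon>_def)
  have el: "\<epsilon> \<le> \<epsilon>1/2" "\<epsilon> \<le> r\<phi>/2" "\<epsilon> \<le> \<delta>/2" "\<epsilon> \<le> r2 / (2 * L\<phi>)"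
    by (simp_all add: \<epsilon>_def)
  define \<mu> where "\<mu> = c / (2 * L\<psi>\<^sup>2)"
  have \<mu>: "\<mu> > 0" using c r\<psi> by (simp add: \<mu>_def)
  have main: "ereal (\<mu> * infdist x (argmin_set f \<inter> M)) \<le> slope_on f M x" if x: "x \<in> ball xb \<epsilon> \<inter> M" for x
  proof -
    obtain s where s: "s \<in> S" "infdist x S = dist x s" using infdist_attains_inf[OF Scl Sne] by blast
    have dxs: "dist x s \<le> dist x xb" using s xb infdist_le[of xb S x] by (simp add: S_def)
    have dxb: "dist x xb < \<epsilon>" using x by (simp add: dist_commute)
    have dsb: "dist s xb < 2 * \<epsilon>" using dist_triangle[of s xb x] dxs dxb by (simp add: dist_commute)
    have sM: "s \<in> M" using SM[OF s(1)] dsb el by linarith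
    have "dist x xb < r\<phi>" using dxb el r\<phi> by linarith
    hence xr: "x \<in> ball xb r\<phi>" by (simp add: dist_commute)
    have "dist s xb < r\<phi>" using dsb el r\<phi> by linarith
    hence sr: "s \<in> ball xb r\<phi>" by (simp add: dist_commute)
    have xb_r: "xb \<in> ball xb r\<phi>" using r\<phi> by simp
    have xU: "x \<in> U" and sU: "s \<in> U" using xr sr r\<phi>(3) by auto
    define x' where "x' = \<phi> x"
    define s' where "s' = \<phi> s"
    have x'L: "x' \<in> V \<inter> L" using img x xU by (auto simp: x'_def)
    have s'L: "s' \<in> V \<inter> L" using img sM sU by (auto simp: s'_def)
    have "dist x' w0 \<le> L\<phi> * dist x xb" using r\<phi>(4) xr xb_r by (simp add: x'_def w0_def dist_norm)
    also have "\<dots> < L\<phi> * (2 * \<epsilon>)" using dxb r\<phi> \<epsilon> by simp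
    also have "\<dots> \<le> r2" using r\<phi> el(4) by (simp add: field_simps)
    finally have x'B: "x' \<in> ball w0 r2 \<inter> L" using x'L by (simp add: dist_commute)
    have "dist s' w0 \<le> L\<phi> * dist s xb" using r\<phi>(4) sr xb_r by (simp add: s'_def w0_def dist_norm)
    also have "\<dots> < L\<phi> * (2 * \<epsilon>)" using dsb r\<phi> by simp
    also have "\<dots> \<le> r2" using r\<phi> el(4) by (simp add: field_simps)
    finally have s'B: "s' \<in> ball w0 r2 \<inter> L" using s'L by (simp add: dist_commute)
    have \<psi>x: "\<psi> x' = x" using UV xU by (simp add: x'_def)
    have \<psi>s: "\<psi> s' = s" using UV sU by (simp add: s'_def)
    have fx: "f x = ereal (g x)" using BM x'B \<psi>x by metis
    have QGx: "ereal m + ereal (\<mu>1/4 * (dist x s)\<^sup>2) \<le> ereal (g x)"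
    proof -
      have "x \<in> ball xb (\<epsilon>1/2)" using dxb el by (simp add: dist_commute)
      thus ?thesis using QGf[of x] s(2) fx m by simp
    qed
    have nx's': "norm (x' - s') \<le> L\<phi> * norm (x - s)" using r\<phi>(4) xr sr by (simp add: x'_def s'_def)
    have "c * (norm (x' - s'))\<^sup>2 \<le> c * (L\<phi> * norm (x - s))\<^sup>2"
      using nx's' c by (intro mult_left_mono power_mono) auto
    also have "\<dots> = \<mu>1/4 * (dist x s)\<^sup>2" using r\<phi> by (simp add: c_def dist_norm power_mult_distrib)
    also have "\<dots> \<le> g x - m" using QGx by simp
    finally have QGv: "c * (norm (x' - s'))\<^sup>2 \<le> g (\<psi> x') - m" using \<psi>x by simp
    have "ereal ((c / (2 * L\<psi>\<^sup>2)) * infdist (\<psi> x') (argmin_set f \<inter> M)) \<le> slope_on f M (\<psi> x')"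
    proof (rule chart_core[where \<phi> = \<phi> and \<psi> = \<psi> and x' = x' and s' = s' and Ug = Ug and wc = w0 and rr = r2 and g = g and L = L])
      show "\<forall>a\<in>ball w0 r2. \<forall>b\<in>ball w0 r2. norm (\<psi> a - \<psi> b) \<le> L\<psi> * norm (a - b)"
        using r\<psi>(4) B\<psi> by blast
      show "\<forall>w\<in>ball w0 r2. \<phi> (\<psi> w) = w" using VU BV by blast
      show "\<forall>w\<in>ball w0 r2. (\<psi> has_derivative blinfun_apply (\<psi>' w)) (at w)" using d\<psi> BV by blast
      show "\<forall>w\<in>ball w0 r2. (\<psi>' has_derivative blinfun_apply (\<psi>'' w)) (at w)" using dd\<psi> BV by blast
      show "\<forall>w\<in>ball w0 r2. \<forall>v. \<bar>Eform g' g'' \<psi> \<psi>' \<psi>'' w v - Eform g' g'' \<psi> \<psi>' \<psi>'' w0 v\<bar> \<le> c / 2 * (norm v)\<^sup>2"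
        using rE(2) by (auto simp: r2_def)
      show "\<psi> s' \<in> argmin_set f \<inter> M" using \<psi>s s sM by (simp add: S_def)
      show "f (\<psi> s') = ereal m" using \<psi>s fS s by simp
    qed (use fin r2 r\<psi> BM psiB dg ddg L minf x'B s'B c QGv in auto)
    thus ?thesis using \<psi>x by (simp add: \<mu>_def)
  qed
  show ?thesis using \<epsilon> \<mu> main by blast
qed

theorem theorem2:
  fixes f :: "'a::euclidean_space \<Rightarrow> ereal" and M :: "'a set" and xb :: 'a
  assumes "\<forall>x. f x \<noteq> -\<infinity>"
    and "closed_fun f"
    and "subdiff_continuous f"
    and "argmin_set f \<noteq> {}"
    and "xb \<in> argmin_set f"
    and "xb \<in> M"
    and "identifiable_manifold f M xb"
  shows "(\<exists>\<epsilon>>0. \<exists>\<mu>>0. \<forall>x\<in>ball xb \<epsilon>.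
            ereal (\<mu> * infdist x (argmin_set f)) \<le> slope f x)
     \<longleftrightarrow> (\<exists>\<epsilon>>0. \<exists>\<mu>>0. \<forall>x\<in>ball xb \<epsilon> \<inter> M.
            ereal (\<mu> * infdist x (argmin_set f \<inter> M)) \<le> slope_on f M x)"
proof
  assume "\<exists>\<epsilon>>0. \<exists>\<mu>>0. \<forall>x\<in>ball xb \<epsilon>. ereal (\<mu> * infdist x (argmin_set f)) \<le> slope f x"
  then obtain \<epsilon>1 \<mu>1 where "\<epsilon>1 > 0" "\<mu>1 > 0"
    "\<forall>x\<in>ball xb \<epsilon>1. ereal (\<mu>1 * infdist x (argmin_set f)) \<le> slope f x" by blast
  thus "\<exists>\<epsilon>>0. \<exists>\<mu>>0. \<forall>x\<in>ball xb \<epsilon> \<inter> M. ereal (\<mu> * infdist x (argmin_set f \<inter> M)) \<le> slope_on f M x"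
    using i_imp_ii[OF assms(1,2,5,7)] by blast
next
  assume "\<exists>\<epsilon>>0. \<exists>\<mu>>0. \<forall>x\<in>ball xb \<epsilon> \<inter> M. ereal (\<mu> * infdist x (argmin_set f \<inter> M)) \<le> slope_on f M x"
  then obtain \<epsilon>0 \<mu>0 where ii: "\<epsilon>0 > 0" "\<mu>0 > 0"
    "\<forall>x\<in>ball xb \<epsilon>0 \<inter> M. ereal (\<mu>0 * infdist x (argmin_set f \<inter> M)) \<le> slope_on f M x" by blast
  have fxb: "f xb \<noteq> \<infinity>" using assms(7) by (simp add: identifiable_manifold_def)
  obtain \<eta> \<delta> where "\<eta> > 0" "\<delta> > 0" "\<forall>x y. dist x xb < \<delta> \<and> \<bar>f x - f xb\<bar> < ereal \<delta> \<and> x \<notin> M \<and>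
         y \<in> limiting_subdiff f x \<longrightarrow> \<eta> \<le> norm y"
    using assms(7) unfolding identifiable_manifold_def by blast
  thus "\<exists>\<epsilon>>0. \<exists>\<mu>>0. \<forall>x\<in>ball xb \<epsilon>. ereal (\<mu> * infdist x (argmin_set f)) \<le> slope f x"
    using ii_imp_i[OF assms(1,2,3,5) fxb assms(6)] ii by blast
qed

end
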